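(* Let $p$ be a prime, $R=W(\overline{\mathbb{F}}_p)$ with Frobenius $\phi$ and $p$-derivation $\delta(x)=(\phi(x)-x^p)/p$, and let $f\in R[y,y',\dots,y^{(r)}]^{\wedge}$ ($p$-adic completion). An element $u\in R$ is a solution of $f(u,\delta u,\dots,\delta^r u)=0$ if and only if (a) $f(\nabla(u))\equiv0\ \mathrm{mod}\ p$, and (b) for all $i\ge0$: $\frac{\partial(\delta^i f)}{\partial p}(\nabla(u)^p)\equiv-\sum_{j\ge0}\frac{\partial(\delta^i f)^{(\phi)}}{\partial y^{(j)}}(\nabla(u)^p)\,\delta^{j+1}u\ \mathrm{mod}\ p$. Moreover, $u$ is a solution of $(\delta f)(u,\delta u,\dots,\delta^{r+1}u)=0$ if and only if (b) holds.
   Context: $R[y,y',y'',\dots]^\wedge$ carries the $p$-derivation $\delta$ extending that of $R$ with $\delta y^{(j)}=y^{(j+1)}$, so $\delta^i f\in R[y,\dots,y^{(r+i)}]^\wedge$. For $u\in R$: $\nabla(u)=(u,\delta u,\delta^2u,\dots)$ and $\nabla(u)^p=(u^p,(\delta u)^p,(\delta^2u)^p,\dots)$. For $g\in R[y,\dots,y^{(s)}]^\wedge$, $g^{(\phi)}$ is $g$ with $\phi$ applied to its coefficients, and $\frac{\partial g}{\partial p}:=\frac1p\big(g^{(\phi)}(y^p,(y')^p,\dots,(y^{(s)})^p)-g(y,\dots,y^{(s)})^p\big)$. *)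

theory Defs
  imports Main "HOL-Library.Poly_Mapping" "HOL-Computational_Algebra.Polynomial"
    "HOL-Computational_Algebra.Primes"
begin

text \<open>R is an abstract commutative ring (type 'a) together with an endomorphism phi,
  subject to conditions characterising (up to unique isomorphism) the Witt vectors
  W(F_p-bar) with their Frobenius: R is p-torsion free, p-adically separated and complete,
  R/pR is a field which is algebraic over F_p and algebraically closed, and phi is a ring
  endomorphism lifting the p-th power map mod p (on W(k), k perfect, the Frobenius lift is
  unique).\<close>

definition Witt_Fpbar_Frobenius :: "nat \<Rightarrow> ('a::comm_ring_1 \<Rightarrow> 'a) \<Rightarrow> bool" where
  "Witt_Fpbar_Frobenius p phi \<longleftrightarrow>
     prime p \<and>
     (\<forall>x::'a. of_nat p * x = 0 \<longrightarrow> x = 0) \<and>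
     (\<forall>x::'a. (\<forall>n. (of_nat p) ^ n dvd x) \<longrightarrow> x = 0) \<and>
     (\<forall>s::nat \<Rightarrow> 'a. (\<forall>n. (of_nat p) ^ n dvd (s (Suc n) - s n)) \<longrightarrow>
         (\<exists>l. \<forall>n. (of_nat p) ^ n dvd (l - s n))) \<and>
     \<not> (of_nat p dvd (1::'a)) \<and>
     (\<forall>x::'a. \<not> of_nat p dvd x \<longrightarrow> (\<exists>y. of_nat p dvd (x * y - 1))) \<and>
     (\<forall>x::'a. \<exists>n>0. of_nat p dvd (x ^ (p ^ n) - x)) \<and>
     (\<forall>P::'a poly. degree P > 0 \<and> lead_coeff P = 1 \<longrightarrow> (\<exists>x. of_nat p dvd poly P x)) \<and>
     phi 1 = 1 \<and> (\<forall>x y. phi (x + y) = phi x + phi y) \<and> (\<forall>x y. phi (x * y) = phi x * phi y) \<and>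
     (\<forall>x. of_nat p dvd (phi x - x ^ p))"

text \<open>Division by p (well defined in a p-torsion-free ring when p divides the argument).\<close>
definition div_p :: "nat \<Rightarrow> 'a::comm_ring_1 \<Rightarrow> 'a" where
  "div_p p x = (THE y. of_nat p * y = x)"

definition delta :: "nat \<Rightarrow> ('a::comm_ring_1 \<Rightarrow> 'a) \<Rightarrow> 'a \<Rightarrow> 'a" where
  "delta p phi x = div_p p (phi x - x ^ p)"

definition nabla :: "nat \<Rightarrow> ('a::comm_ring_1 \<Rightarrow> 'a) \<Rightarrow> 'a \<Rightarrow> nat \<Rightarrow> 'a" where
  "nabla p phi u = (\<lambda>j. (delta p phi ^^ j) u)"

definition nabla_pow :: "nat \<Rightarrow> ('a::comm_ring_1 \<Rightarrow> 'a) \<Rightarrow> 'a \<Rightarrow> nat \<Rightarrow> 'a" where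
  "nabla_pow p phi u = (\<lambda>j. ((delta p phi ^^ j) u) ^ p)"

text \<open>An element of the p-adic completion of R[y^(0), y^(1), ...] is represented by its
  coefficient function on monomials (monomial = finitely supported exponent vector
  (nat =>0 nat), variable j standing for y^(j)); it must be p-adically restricted:
  for every n only finitely many coefficients are not divisible by p^n.\<close>

type_synonym 'a pser = "(nat \<Rightarrow>\<^sub>0 nat) \<Rightarrow> 'a"

definition restricted :: "nat \<Rightarrow> 'a::comm_ring_1 pser \<Rightarrow> bool" where
  "restricted p c \<longleftrightarrow> (\<forall>n. finite {m. \<not> (of_nat p) ^ n dvd c m})"

definition in_vars :: "nat \<Rightarrow> 'a::zero pser \<Rightarrow> bool" where
  "in_vars r c \<longleftrightarrow> (\<forall>m. c m \<noteq> 0 \<longrightarrow> Poly_Mapping.keys m \<subseteq> {..r})"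

definition mono_eval :: "(nat \<Rightarrow> 'a::comm_ring_1) \<Rightarrow> (nat \<Rightarrow>\<^sub>0 nat) \<Rightarrow> 'a" where
  "mono_eval x m = (\<Prod>j\<in>Poly_Mapping.keys m. x j ^ Poly_Mapping.lookup m j)"

text \<open>Evaluation at a point x (value of y^(j) is x j), as a p-adically convergent sum.\<close>
definition ps_eval :: "nat \<Rightarrow> 'a::comm_ring_1 pser \<Rightarrow> (nat \<Rightarrow> 'a) \<Rightarrow> 'a" where
  "ps_eval p c x = (THE s. \<forall>n. \<exists>F. finite F \<and>
      (\<forall>G. finite G \<and> F \<subseteq> G \<longrightarrow> (of_nat p) ^ n dvd (s - (\<Sum>m\<in>G. c m * mono_eval x m))))"

definition ps_one :: "'a::comm_ring_1 pser" where
  "ps_one = (\<lambda>m. if m = 0 then 1 else 0)"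

definition ps_var :: "nat \<Rightarrow> 'a::comm_ring_1 pser" where
  "ps_var j = (\<lambda>m. if m = Poly_Mapping.single j 1 then 1 else 0)"

definition ps_add :: "'a::comm_ring_1 pser \<Rightarrow> 'a pser \<Rightarrow> 'a pser" where
  "ps_add c d = (\<lambda>m. c m + d m)"

definition ps_smul :: "'a::comm_ring_1 \<Rightarrow> 'a pser \<Rightarrow> 'a pser" where
  "ps_smul a c = (\<lambda>m. a * c m)"

definition ps_mult :: "'a::comm_ring_1 pser \<Rightarrow> 'a pser \<Rightarrow> 'a pser" where
  "ps_mult c d = (\<lambda>m. \<Sum>(a, b)\<in>{(a, b). a + b = m}. c a * d b)"

definition ps_pow :: "'a::comm_ring_1 pser \<Rightarrow> nat \<Rightarrow> 'a pser" where
  "ps_pow c k = (ps_mult c ^^ k) ps_one"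

text \<open>The image of y^(j) under the Frobenius lift of R[y,y',...]^: (y^(j))^p + p y^(j+1).\<close>
definition frob_var :: "nat \<Rightarrow> nat \<Rightarrow> 'a::comm_ring_1 pser" where
  "frob_var p j = ps_add (ps_pow (ps_var j) p) (ps_smul (of_nat p) (ps_var (Suc j)))"

definition frob_mono :: "nat \<Rightarrow> (nat \<Rightarrow>\<^sub>0 nat) \<Rightarrow> 'a::comm_ring_1 pser" where
  "frob_mono p m = foldr (\<lambda>j acc. ps_mult (ps_pow (frob_var p j) (Poly_Mapping.lookup m j)) acc)
      (sorted_list_of_set (Poly_Mapping.keys m)) ps_one"

text \<open>The Frobenius lift phi on R[y,y',...]^ extending phi on R with
  phi(y^(j)) = (y^(j))^p + p y^(j+1) (for each target monomial only finitely many source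
  monomials contribute).\<close>
definition ps_phi :: "nat \<Rightarrow> ('a::comm_ring_1 \<Rightarrow> 'a) \<Rightarrow> 'a pser \<Rightarrow> 'a pser" where
  "ps_phi p phi (c :: 'a pser) = (\<lambda>n. \<Sum>m\<in>{m. c m \<noteq> 0 \<and> (frob_mono p m n :: 'a) \<noteq> 0}. phi (c m) * frob_mono p m n)"

definition ps_delta :: "nat \<Rightarrow> ('a::comm_ring_1 \<Rightarrow> 'a) \<Rightarrow> 'a pser \<Rightarrow> 'a pser" where
  "ps_delta p phi c = (\<lambda>n. div_p p (ps_phi p phi c n - ps_pow c p n))"

definition coeff_phi :: "('a \<Rightarrow> 'a) \<Rightarrow> 'a pser \<Rightarrow> 'a pser" where
  "coeff_phi phi c = (\<lambda>m. phi (c m))"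

definition ps_deriv :: "nat \<Rightarrow> 'a::comm_ring_1 pser \<Rightarrow> 'a pser" where
  "ps_deriv j c = (\<lambda>m. of_nat (Suc (Poly_Mapping.lookup m j)) * c (m + Poly_Mapping.single j 1))"

text \<open>Substitution y^(j) := (y^(j))^p.\<close>
definition pow_subst :: "nat \<Rightarrow> 'a::comm_ring_1 pser \<Rightarrow> 'a pser" where
  "pow_subst p c = (\<lambda>n. \<Sum>m\<in>{m. c m \<noteq> 0 \<and> Poly_Mapping.map (\<lambda>k. p * k) m = n}. c m)"

definition ps_dp :: "nat \<Rightarrow> ('a::comm_ring_1 \<Rightarrow> 'a) \<Rightarrow> 'a pser \<Rightarrow> 'a pser" where
  "ps_dp p phi c = (\<lambda>n. div_p p (pow_subst p (coeff_phi phi c) n - ps_pow c p n))"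

end

theory Submission
  imports Defs "HOL-Library.FuncSet"
begin


locale witt =
  fixes p :: nat and phi :: "'a::comm_ring_1 \<Rightarrow> 'a"
  assumes W: "Witt_Fpbar_Frobenius p phi"
begin

abbreviation P :: 'a where "P \<equiv> of_nat p"

lemma prime: "prime p" using W unfolding Witt_Fpbar_Frobenius_def by blast
lemma p_pos: "p > 0" using prime prime_gt_0_nat by blast
lemma p_ge2: "p \<ge> 2" using prime prime_ge_2_nat by blast
lemma tf: "P * x = 0 \<Longrightarrow> x = 0" using W unfolding Witt_Fpbar_Frobenius_def by blast
lemma sep: "(\<And>n. P ^ n dvd x) \<Longrightarrow> x = 0" using W unfolding Witt_Fpbar_Frobenius_def by blast
lemma compl: "(\<And>n. P ^ n dvd (s (Suc n) - s n)) \<Longrightarrow> \<exists>l. \<forall>n. P ^ n dvd (l - s n)"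
  using W unfolding Witt_Fpbar_Frobenius_def by blast
lemma notunit: "\<not> P dvd 1" using W unfolding Witt_Fpbar_Frobenius_def by blast
lemma invmod: "\<not> P dvd x \<Longrightarrow> \<exists>y. P dvd (x * y - 1)" using W unfolding Witt_Fpbar_Frobenius_def by blast
lemma phi_1[simp]: "phi 1 = 1" using W unfolding Witt_Fpbar_Frobenius_def by blast
lemma phi_add[simp]: "phi (x + y) = phi x + phi y" using W unfolding Witt_Fpbar_Frobenius_def by blast
lemma phi_mult[simp]: "phi (x * y) = phi x * phi y" using W unfolding Witt_Fpbar_Frobenius_def by blast
lemma phi_cong: "P dvd (phi x - x ^ p)" using W unfolding Witt_Fpbar_Frobenius_def by blast

lemma phi_0[simp]: "phi 0 = 0"
  using phi_add[of 0 0] by simp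
lemma phi_uminus[simp]: "phi (- x) = - phi x"
  using phi_add[of x "-x"] by (simp add: eq_neg_iff_add_eq_0 add.commute)
lemma phi_diff[simp]: "phi (x - y) = phi x - phi y"
  using phi_add[of x "-y"] by simp
lemma phi_of_nat[simp]: "phi (of_nat n) = of_nat n"
  by (induction n) auto
lemma phi_pow[simp]: "phi (x ^ n) = phi x ^ n"
  by (induction n) auto
lemma phi_sum: "phi (sum f A) = (\<Sum>a\<in>A. phi (f a))"
  by (induction A rule: infinite_finite_induct) auto
lemma phi_prod: "phi (prod f A) = (\<Prod>a\<in>A. phi (f a))"
  by (induction A rule: infinite_finite_induct) auto
lemma phi_dvd: "a dvd b \<Longrightarrow> phi a dvd phi b"
  by (metis dvd_def phi_mult)
lemma phi_Pdvd: "P ^ n dvd x \<Longrightarrow> P ^ n dvd phi x"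
  using phi_dvd[of "P^n" x] by simp

lemma cancelP: "P * a = P * b \<Longrightarrow> a = b"
  using tf[of "a - b"] by (simp add: right_diff_distrib)
lemma dvd_cancelP: "P * y dvd P * z \<Longrightarrow> y dvd z"
proof -
  assume "P * y dvd P * z"
  then obtain w where "P * z = P * y * w" by (auto elim: dvdE)
  then have "z = y * w" using cancelP[of z "y*w"] by (simp add: mult.assoc)
  then show ?thesis by simp
qed
lemma dvd_cancelP_pow: "P ^ Suc n dvd P * z \<Longrightarrow> P ^ n dvd z"
  using dvd_cancelP[of "P^n" z] by simp

lemma div_p_eq: "P * y = x \<Longrightarrow> div_p p x = y"
  unfolding div_p_def by (rule the_equality) (auto intro: cancelP)
lemma div_p_mult: "P * div_p p x = x" if "P dvd x"
proof -
  from that obtain y where "x = P * y" by (auto elim: dvdE)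
  then show ?thesis using div_p_eq[of y x] by simp
qed
lemma div_p_0[simp]: "div_p p (0::'a) = 0" using div_p_eq[of 0 0] by simp

lemma notdvd_mult: "\<not> P dvd a \<Longrightarrow> \<not> P dvd b \<Longrightarrow> \<not> P dvd (a * b)"
proof
  assume a: "\<not> P dvd a" and b: "\<not> P dvd b" and ab: "P dvd a * b"
  obtain y where y: "P dvd (a * y - 1)" using invmod a by blast
  obtain z where z: "P dvd (b * z - 1)" using invmod b by blast
  have "1 = a * b * (y * z) - (a * y - 1) * (b * z - 1) - (a * y - 1) - (b * z - 1)"
    by (simp add: algebra_simps)
  also have "P dvd \<dots>"
  proof -
    have "P dvd a * b * (y * z)" using ab by simp
    moreover have "P dvd (a * y - 1) * (b * z - 1)" using y by simp
    ultimately have "P dvd a * b * (y * z) - (a * y - 1) * (b * z - 1)" by (rule dvd_diff)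
    then have "P dvd a * b * (y * z) - (a * y - 1) * (b * z - 1) - (a * y - 1)" using y by (rule dvd_diff)
    then show ?thesis using z by (rule dvd_diff)
  qed
  finally show False using notunit by simp
qed
lemma notdvd_pow: "\<not> P dvd a \<Longrightarrow> \<not> P dvd (a ^ k)"
  by (induction k) (auto simp: notunit notdvd_mult)
lemma notdvd_phi: "\<not> P dvd w \<Longrightarrow> \<not> P dvd phi w"
proof
  assume "\<not> P dvd w" "P dvd phi w"
  have "P dvd phi w - (phi w - w ^ p)" using \<open>P dvd phi w\<close> phi_cong[of w] by (rule dvd_diff)
  moreover have "phi w - (phi w - w ^ p) = w ^ p" by simp
  ultimately have "P dvd w ^ p" by metis
  then show False using notdvd_pow[OF \<open>\<not> P dvd w\<close>, of p] by simp
qed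

lemma valuation: assumes "x \<noteq> 0" shows "\<exists>k w. x = P ^ k * w \<and> \<not> P dvd w"
proof -
  have ex: "\<exists>n. \<not> P ^ n dvd x" using sep assms by blast
  define n where "n = (LEAST n. \<not> P ^ n dvd x)"
  have n: "\<not> P ^ n dvd x" unfolding n_def by (rule LeastI_ex[OF ex])
  then have "n \<noteq> 0" by (cases n) auto
  then obtain k where k: "n = Suc k" by (cases n) auto
  have "P ^ k dvd x" using not_less_Least[of k "\<lambda>n. \<not> P ^ n dvd x"] k n_def by auto
  then obtain w where w: "x = P ^ k * w" by (auto elim: dvdE)
  have "\<not> P dvd w"
  proof
    assume "P dvd w"
    then obtain v where "w = P * v" by (auto elim: dvdE)
    then have "x = P ^ n * v" using w k by simp
    then have "P ^ n dvd x" by simp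
    then show False using n by simp
  qed
  then show ?thesis using w by blast
qed

abbreviation dl where "dl \<equiv> delta p phi"

lemma delta_mult: "P * dl x = phi x - x ^ p"
  unfolding delta_def by (rule div_p_mult[OF phi_cong])
lemma delta_0[simp]: "dl 0 = 0"
  unfolding delta_def by (simp add: zero_power[OF p_pos])
lemma delta_iter_0[simp]: "(dl ^^ i) 0 = 0"
  by (induction i) auto

lemma delta_val: "\<not> P dvd w \<Longrightarrow> \<not> P dvd (dl ^^ k) (P ^ k * w)"
proof (induction k arbitrary: w)
  case 0 then show ?case by simp
next
  case (Suc k)
  define w' where "w' = phi w - P ^ ((Suc k) * (p - 1)) * w ^ p"
  have ee: "Suc k * p = Suc k + Suc k * (p - 1)" using p_pos
    by (metis Suc_diff_1 mult_Suc_right)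
  have e: "(P ^ (Suc k)) ^ p = P * P ^ k * P ^ ((Suc k) * (p - 1))"
    by (simp only: power_mult[symmetric] ee power_add) simp
  have "P * dl (P ^ Suc k * w) = phi (P ^ Suc k * w) - (P ^ Suc k * w) ^ p"
    by (rule delta_mult)
  also have "\<dots> = P ^ Suc k * phi w - (P ^ Suc k) ^ p * w ^ p"
    by (simp add: power_mult_distrib)
  also have "\<dots> = P * (P ^ k * w')"
    unfolding e w'_def by (simp add: algebra_simps)
  finally have "P * dl (P ^ Suc k * w) = P * (P ^ k * w')" .
  then have d: "dl (P ^ Suc k * w) = P ^ k * w'" by (rule cancelP)
  have "\<not> P dvd w'"
  proof
    assume "P dvd w'"
    moreover have "P dvd P ^ ((Suc k) * (p - 1)) * w ^ p"
      using p_ge2 by (intro dvd_mult2) (simp add: dvd_power)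
    ultimately have "P dvd phi w" unfolding w'_def by (metis diff_add_cancel dvd_add)
    then show False using notdvd_phi Suc.prems by blast
  qed
  have "(dl ^^ Suc k) (P ^ Suc k * w) = (dl ^^ k) (P ^ k * w')"
    by (simp only: funpow_Suc_right comp_def d)
  then show ?case using Suc.IH[of w'] \<open>\<not> P dvd w'\<close> by simp
qed

lemma zero_iff_all: "x = 0 \<longleftrightarrow> (\<forall>i. P dvd (dl ^^ i) x)"
proof
  assume "\<forall>i. P dvd (dl ^^ i) x"
  then show "x = 0" using valuation delta_val by blast
qed simp

lemma zero_iff_delta: "x = 0 \<longleftrightarrow> P dvd x \<and> dl x = 0"
proof
  assume a: "P dvd x \<and> dl x = 0"
  have "P dvd (dl ^^ i) x" for i
    using a by (cases i) (auto simp: funpow_Suc_right simp del: funpow.simps)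
  then show "x = 0" using zero_iff_all by blast
qed simp

end


lemma lookup_map_pm: "Poly_Mapping.lookup (Poly_Mapping.map f m) k = (if Poly_Mapping.lookup m k = 0 then 0 else f (Poly_Mapping.lookup m k))"
  by transfer (simp add: when_def)

lemma finite_bounded_pm:
  assumes "finite K"
  shows "finite {a :: nat \<Rightarrow>\<^sub>0 nat. Poly_Mapping.keys a \<subseteq> K \<and> (\<forall>i\<in>K. Poly_Mapping.lookup a i \<le> B i)}"
proof -
  let ?S = "{a :: nat \<Rightarrow>\<^sub>0 nat. Poly_Mapping.keys a \<subseteq> K \<and> (\<forall>i\<in>K. Poly_Mapping.lookup a i \<le> B i)}"
  have "inj_on (\<lambda>a. restrict (Poly_Mapping.lookup a) K) ?S"
  proof (rule inj_onI)
    fix a b assume a: "a \<in> ?S" and b: "b \<in> ?S" and e: "restrict (Poly_Mapping.lookup a) K = restrict (Poly_Mapping.lookup b) K"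
    show "a = b"
    proof (rule poly_mapping_eqI)
      fix i show "Poly_Mapping.lookup a i = Poly_Mapping.lookup b i"
      proof (cases "i \<in> K")
        case True then show ?thesis using fun_cong[OF e, of i] by simp
      next
        case False then have "i \<notin> Poly_Mapping.keys a" "i \<notin> Poly_Mapping.keys b" using a b by auto
        then show ?thesis by (simp add: in_keys_iff)
      qed
    qed
  qed
  moreover have "(\<lambda>a. restrict (Poly_Mapping.lookup a) K) ` ?S \<subseteq> PiE K (\<lambda>i. {..B i})"
    by (rule image_subsetI) (simp add: PiE_iff)
  moreover have "finite (PiE K (\<lambda>i. {..B i}))" using assms by (intro finite_PiE) auto
  ultimately show ?thesis by (meson finite_imageD finite_subset)
qed
lemma finite_summands: "finite {a :: nat \<Rightarrow>\<^sub>0 nat. \<exists>b. a + b = m}"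
proof -
  have "{a :: nat \<Rightarrow>\<^sub>0 nat. \<exists>b. a + b = m} \<subseteq> {a. Poly_Mapping.keys a \<subseteq> Poly_Mapping.keys m \<and> (\<forall>i\<in>Poly_Mapping.keys m. Poly_Mapping.lookup a i \<le> Poly_Mapping.lookup m i)}"
  proof (safe)
    fix a b :: "nat \<Rightarrow>\<^sub>0 nat" and i assume "i \<in> Poly_Mapping.keys a" 
    then show "i \<in> Poly_Mapping.keys (a + b)" by (simp add: in_keys_iff lookup_add)
  next
    fix a b :: "nat \<Rightarrow>\<^sub>0 nat" and i 
    show "Poly_Mapping.lookup a i \<le> Poly_Mapping.lookup (a + b) i" by (simp add: lookup_add)
  qed
  then show ?thesis by (rule finite_subset) (rule finite_bounded_pm, simp)
qed

lemma finite_decomp: "finite {(a, b). (a :: nat \<Rightarrow>\<^sub>0 nat) + b = m}"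
proof -
  have "{(a, b). (a :: nat \<Rightarrow>\<^sub>0 nat) + b = m} \<subseteq> {a. \<exists>b. a + b = m} \<times> {b. \<exists>a. a + b = m}"
    by blast
  moreover have "{b :: nat \<Rightarrow>\<^sub>0 nat. \<exists>a. a + b = m} = {a. \<exists>b. a + b = m}"
    by (auto simp: add.commute)
  ultimately show ?thesis using finite_summands[of m]
    by (metis (no_types, lifting) finite_SigmaI finite_subset)
qed

context witt begin

definition S :: "nat \<Rightarrow> 'a pser \<Rightarrow> (nat \<Rightarrow>\<^sub>0 nat) set" where
  "S n c = {m. \<not> P ^ n dvd c m}"

lemma restricted_S: "restricted p c \<longleftrightarrow> (\<forall>n. finite (S n c))"
  unfolding restricted_def S_def ..

lemma S_mono: "n \<le> n' \<Longrightarrow> S n c \<subseteq> S n' c"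
  unfolding S_def using le_imp_power_dvd dvd_trans by blast

lemma notin_S: "m \<notin> S n c \<Longrightarrow> P ^ n dvd c m" unfolding S_def by simp

lemma tail_gen:
  assumes "finite A" "finite B" "\<And>m. m \<in> (A - B) \<union> (B - A) \<Longrightarrow> P ^ n dvd t m"
  shows "P ^ n dvd (sum t A - sum t B)"
proof -
  have "sum t A = sum t (A \<inter> B) + sum t (A - B)" using assms by (simp add: sum.Int_Diff)
  moreover have "sum t B = sum t (A \<inter> B) + sum t (B - A)" using assms
    by (metis inf_commute sum.Int_Diff)
  moreover have "P ^ n dvd sum t (A - B)" "P ^ n dvd sum t (B - A)" using assms by (auto intro: dvd_sum)
  ultimately show ?thesis by (simp add: dvd_diff)
qed

lemma tail_S:
  assumes "finite A" "finite B" "S n c \<subseteq> A" "S n c \<subseteq> B"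
  shows "P ^ n dvd ((\<Sum>m\<in>A. c m * g m) - (\<Sum>m\<in>B. c m * g m))"
proof (rule tail_gen)
  fix m assume "m \<in> (A - B) \<union> (B - A)"
  then have "m \<notin> S n c" using assms by auto
  then show "P ^ n dvd c m * g m" by (auto dest: notin_S)
qed (use assms in auto)

abbreviation mev where "mev \<equiv> mono_eval"

lemma ev_approx:
  fixes c d :: "'a pser" and x :: "nat \<Rightarrow> 'a"
  assumes "restricted p c" "finite G" "S n c \<subseteq> G"
  shows "P ^ n dvd (ps_eval p c x - (\<Sum>m\<in>G. c m * mev x m))"
proof -
  have fin: "finite (S k c)" for k using assms(1) restricted_S by blast
  define s where "s k = (\<Sum>m\<in>S k c. c m * mev x m)" for k
  have "P ^ k dvd (s (Suc k) - s k)" for k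
    unfolding s_def using fin S_mono[of k "Suc k" c] by (intro tail_S) auto
  then obtain l where l: "\<And>k. P ^ k dvd (l - s k)" using compl by blast
  have L: "P ^ k dvd (l - (\<Sum>m\<in>G. c m * mev x m))" if "finite G" "S k c \<subseteq> G" for k G
  proof -
    have "P ^ k dvd (s k - (\<Sum>m\<in>G. c m * mev x m))"
      unfolding s_def using that fin by (intro tail_S) auto
    then have "P ^ k dvd (l - s k) + (s k - (\<Sum>m\<in>G. c m * mev x m))" using l by (rule dvd_add[rotated])
    then show ?thesis by simp
  qed
  have "ps_eval p c x = l"
    unfolding ps_eval_def
  proof (rule the_equality)
    show "\<forall>n. \<exists>F. finite F \<and> (\<forall>G. finite G \<and> F \<subseteq> G \<longrightarrow> P ^ n dvd (l - (\<Sum>m\<in>G. c m * mono_eval x m)))"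
      using L fin by blast
  next
    fix t assume t: "\<forall>n. \<exists>F. finite F \<and> (\<forall>G. finite G \<and> F \<subseteq> G \<longrightarrow> P ^ n dvd (t - (\<Sum>m\<in>G. c m * mono_eval x m)))"
    have "P ^ n dvd (t - l)" for n
    proof -
      obtain F where F: "finite F" "\<And>G. finite G \<and> F \<subseteq> G \<Longrightarrow> P ^ n dvd (t - (\<Sum>m\<in>G. c m * mono_eval x m))"
        using t by blast
      let ?G = "F \<union> S n c"
      have "P ^ n dvd (t - (\<Sum>m\<in>?G. c m * mono_eval x m))" using F fin by auto
      moreover have "P ^ n dvd (l - (\<Sum>m\<in>?G. c m * mono_eval x m))" using L F fin by auto
      ultimately have "P ^ n dvd (t - (\<Sum>m\<in>?G. c m * mono_eval x m)) - (l - (\<Sum>m\<in>?G. c m * mono_eval x m))"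
        by (rule dvd_diff)
      then show ?thesis by simp
    qed
    then show "t = l" using sep[of "t - l"] by simp
  qed
  then show ?thesis using L assms by simp
qed

lemma ev_eqI:
  fixes c d :: "'a pser" and x :: "nat \<Rightarrow> 'a"
  assumes "\<And>n. \<exists>G. finite G \<and> S n c \<subseteq> G \<and> P ^ n dvd (v - (\<Sum>m\<in>G. c m * mev x m))"
  shows "ps_eval p c x = v" "restricted p c"
proof -
  show r: "restricted p c" unfolding restricted_S using assms finite_subset by blast
  have "P ^ n dvd (ps_eval p c x - v)" for n
  proof -
    obtain G where G: "finite G" "S n c \<subseteq> G" "P ^ n dvd (v - (\<Sum>m\<in>G. c m * mev x m))"
      using assms by blast
    have "P ^ n dvd (ps_eval p c x - (\<Sum>m\<in>G. c m * mev x m)) - (v - (\<Sum>m\<in>G. c m * mev x m))"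
      using ev_approx[OF r G(1,2)] G(3) by (rule dvd_diff)
    then show ?thesis by simp
  qed
  then show "ps_eval p c x = v" using sep[of "ps_eval p c x - v"] by simp
qed

lemma ev_fin:
  fixes c d :: "'a pser" and x :: "nat \<Rightarrow> 'a"
  assumes "finite K" "{m. c m \<noteq> 0} \<subseteq> K"
  shows "ps_eval p c x = (\<Sum>m\<in>K. c m * mev x m)" "restricted p c"
proof -
  have "S n c \<subseteq> K" for n using assms(2) unfolding S_def by auto
  then have "\<exists>G. finite G \<and> S n c \<subseteq> G \<and> P ^ n dvd ((\<Sum>m\<in>K. c m * mev x m) - (\<Sum>m\<in>G. c m * mev x m))" for n
    using assms by (intro exI[of _ K]) auto
  then show "ps_eval p c x = (\<Sum>m\<in>K. c m * mev x m)" "restricted p c" by (rule ev_eqI)+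
qed

lemma restricted_fin: fixes c :: "'a pser" assumes "finite {m. c m \<noteq> 0}" shows "restricted p c"
  by (rule ev_fin(2)[OF assms subset_refl])

lemma mono_K:
  assumes "finite K" "Poly_Mapping.keys m \<subseteq> K"
  shows "mev x m = (\<Prod>j\<in>K. x j ^ Poly_Mapping.lookup m j)"
proof -
  have "\<forall>i\<in>K - Poly_Mapping.keys m. x i ^ Poly_Mapping.lookup m i = 1" by (simp add: in_keys_iff)
  then show ?thesis unfolding mono_eval_def by (rule prod.mono_neutral_left[OF assms])
qed

lemma mono_add: "mev x (a + b) = mev x a * mev x b"
proof -
  let ?K = "Poly_Mapping.keys a \<union> Poly_Mapping.keys b"
  have "mev x (a + b) = (\<Prod>j\<in>?K. x j ^ Poly_Mapping.lookup (a + b) j)"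
    by (intro mono_K) (simp_all add: keys_add)
  also have "\<dots> = (\<Prod>j\<in>?K. x j ^ Poly_Mapping.lookup a j) * (\<Prod>j\<in>?K. x j ^ Poly_Mapping.lookup b j)"
    unfolding lookup_add power_add by (rule prod.distrib)
  also have "\<dots> = mev x a * mev x b" by (subst (1 2) mono_K[of "?K"]) auto
  finally show ?thesis .
qed

lemma mono_zero[simp]: "mev x 0 = 1" unfolding mono_eval_def by simp

lemma mono_single[simp]: "mev x (Poly_Mapping.single j k) = x j ^ k"
  unfolding mono_eval_def by simp

lemma mono_phi: "mev (\<lambda>j. phi (x j)) m = phi (mev x m)"
  unfolding mono_eval_def by (simp add: phi_prod)

lemma mono_pow_map: "mev x (Poly_Mapping.map (\<lambda>k. p * k) m) = mev (\<lambda>j. x j ^ p) m"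
proof -
  have "Poly_Mapping.keys (Poly_Mapping.map (\<lambda>k. p * k) m) = Poly_Mapping.keys m"
    using p_pos by (simp add: in_keys_iff lookup_map_pm set_eq_iff)
  then show ?thesis unfolding mono_eval_def
    by (intro prod.cong) (simp_all add: lookup_map_pm power_mult)
qed

lemma ev_add:
  fixes c d :: "'a pser" and x :: "nat \<Rightarrow> 'a"
  assumes "restricted p c" "restricted p d"
  shows "ps_eval p (ps_add c d) x = ps_eval p c x + ps_eval p d x" "restricted p (ps_add c d)"
proof -
  have "\<exists>G. finite G \<and> S n (ps_add c d) \<subseteq> G \<and>
      P ^ n dvd (ps_eval p c x + ps_eval p d x - (\<Sum>m\<in>G. ps_add c d m * mev x m))" for n
  proof (intro exI conjI)
    let ?G = "S n c \<union> S n d"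
    show "finite ?G" using assms restricted_S by blast
    show "S n (ps_add c d) \<subseteq> ?G" unfolding S_def ps_add_def by (auto intro: dvd_add)
    have "P ^ n dvd (ps_eval p c x - (\<Sum>m\<in>?G. c m * mev x m)) + (ps_eval p d x - (\<Sum>m\<in>?G. d m * mev x m))"
      using assms \<open>finite ?G\<close> by (intro dvd_add ev_approx) auto
    then show "P ^ n dvd (ps_eval p c x + ps_eval p d x - (\<Sum>m\<in>?G. ps_add c d m * mev x m))"
      by (simp add: ps_add_def algebra_simps sum.distrib)
  qed
  then show "ps_eval p (ps_add c d) x = ps_eval p c x + ps_eval p d x" "restricted p (ps_add c d)"
    by (rule ev_eqI)+
qed

lemma ev_sub:
  fixes c d :: "'a pser" and x :: "nat \<Rightarrow> 'a"
  assumes "restricted p c" "restricted p d"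
  shows "ps_eval p (\<lambda>m. c m - d m) x = ps_eval p c x - ps_eval p d x" "restricted p (\<lambda>m. c m - d m)"
proof -
  have "\<exists>G. finite G \<and> S n (\<lambda>m. c m - d m) \<subseteq> G \<and>
      P ^ n dvd (ps_eval p c x - ps_eval p d x - (\<Sum>m\<in>G. (c m - d m) * mev x m))" for n
  proof (intro exI conjI)
    let ?G = "S n c \<union> S n d"
    show "finite ?G" using assms restricted_S by blast
    show "S n (\<lambda>m. c m - d m) \<subseteq> ?G" unfolding S_def by (auto intro: dvd_diff)
    have "P ^ n dvd (ps_eval p c x - (\<Sum>m\<in>?G. c m * mev x m)) - (ps_eval p d x - (\<Sum>m\<in>?G. d m * mev x m))"
      using assms \<open>finite ?G\<close> by (intro dvd_diff ev_approx) auto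
    then show "P ^ n dvd (ps_eval p c x - ps_eval p d x - (\<Sum>m\<in>?G. (c m - d m) * mev x m))"
      by (simp add: algebra_simps sum_subtractf)
  qed
  then show "ps_eval p (\<lambda>m. c m - d m) x = ps_eval p c x - ps_eval p d x" "restricted p (\<lambda>m. c m - d m)"
    by (rule ev_eqI)+
qed

lemma ev_smul:
  fixes c d :: "'a pser" and x :: "nat \<Rightarrow> 'a"
  assumes "restricted p c"
  shows "ps_eval p (ps_smul a c) x = a * ps_eval p c x" "restricted p (ps_smul a c)"
proof -
  have "\<exists>G. finite G \<and> S n (ps_smul a c) \<subseteq> G \<and>
      P ^ n dvd (a * ps_eval p c x - (\<Sum>m\<in>G. ps_smul a c m * mev x m))" for n
  proof (intro exI conjI)
    let ?G = "S n c"
    show "finite ?G" using assms restricted_S by blast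
    show "S n (ps_smul a c) \<subseteq> ?G" unfolding S_def ps_smul_def by auto
    have "P ^ n dvd a * (ps_eval p c x - (\<Sum>m\<in>?G. c m * mev x m))"
      using assms \<open>finite ?G\<close> by (intro dvd_mult ev_approx) auto
    then show "P ^ n dvd (a * ps_eval p c x - (\<Sum>m\<in>?G. ps_smul a c m * mev x m))"
      by (simp add: ps_smul_def algebra_simps sum_distrib_left)
  qed
  then show "ps_eval p (ps_smul a c) x = a * ps_eval p c x" "restricted p (ps_smul a c)"
    by (rule ev_eqI)+
qed

lemma ev_mult:
  fixes c d :: "'a pser" and x :: "nat \<Rightarrow> 'a"
  assumes "restricted p c" "restricted p d"
  shows "ps_eval p (ps_mult c d) x = ps_eval p c x * ps_eval p d x" "restricted p (ps_mult c d)"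
proof -
  have "\<exists>G. finite G \<and> S n (ps_mult c d) \<subseteq> G \<and>
      P ^ n dvd (ps_eval p c x * ps_eval p d x - (\<Sum>m\<in>G. ps_mult c d m * mev x m))" for n
  proof (intro exI conjI)
    let ?A = "S n c" and ?B = "S n d"
    have fA: "finite ?A" and fB: "finite ?B" using assms restricted_S by blast+
    let ?G = "(\<lambda>(a, b). a + b) ` (?A \<times> ?B)"
    show fG: "finite ?G" using fA fB by auto
    show "S n (ps_mult c d) \<subseteq> ?G"
    proof
      fix m assume "m \<in> S n (ps_mult c d)"
      then have "\<not> P ^ n dvd (\<Sum>(a, b)\<in>{(a, b). a + b = m}. c a * d b)"
        unfolding S_def ps_mult_def by simp
      then obtain a b where ab: "a + b = m" "\<not> P ^ n dvd c a * d b"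
        using dvd_sum[of "{(a, b). a + b = m}" "P ^ n" "\<lambda>(a, b). c a * d b"] by auto
      then have "a \<in> ?A" "b \<in> ?B" unfolding S_def by auto
      then show "m \<in> ?G" using ab by force
    qed
    define t where "t = (\<lambda>(a::nat \<Rightarrow>\<^sub>0 nat, b). c a * d b * mev x (a + b))"
    have step1: "P ^ n dvd (\<Sum>m\<in>?G. ps_mult c d m * mev x m) - (\<Sum>m\<in>?G. \<Sum>ab\<in>{ab\<in>?A \<times> ?B. (\<lambda>(a, b). a + b) ab = m}. t ab)"
    proof -
      have "P ^ n dvd ps_mult c d m * mev x m - (\<Sum>ab\<in>{ab\<in>?A \<times> ?B. (\<lambda>(a, b). a + b) ab = m}. t ab)" for m
      proof -
        have e1: "ps_mult c d m * mev x m = (\<Sum>ab\<in>{(a, b). a + b = m}. t ab)"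
          unfolding ps_mult_def t_def sum_distrib_right by (intro sum.cong) auto
        have "P ^ n dvd (\<Sum>ab\<in>{(a, b). a + b = m}. t ab) - (\<Sum>ab\<in>{ab\<in>?A \<times> ?B. (\<lambda>(a, b). a + b) ab = m}. t ab)"
        proof (rule tail_gen)
          show "finite {(a, b). a + b = m}" by (rule finite_decomp)
          show "finite {ab\<in>?A \<times> ?B. (\<lambda>(a, b). a + b) ab = m}" using fA fB by auto
          fix ab assume ab: "ab \<in> ({(a, b). a + b = m} - {ab\<in>?A \<times> ?B. (\<lambda>(a, b). a + b) ab = m}) \<union>
              ({ab\<in>?A \<times> ?B. (\<lambda>(a, b). a + b) ab = m} - {(a, b). a + b = m})"
          then obtain a b where "ab = (a, b)" "a \<notin> ?A \<or> b \<notin> ?B" by auto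
          then show "P ^ n dvd t ab" unfolding t_def S_def by auto
        qed
        then show ?thesis using e1 by simp
      qed
      then show ?thesis unfolding sum_subtractf[symmetric] by (intro dvd_sum)
    qed
    have step2: "(\<Sum>m\<in>?G. \<Sum>ab\<in>{ab\<in>?A \<times> ?B. (\<lambda>(a, b). a + b) ab = m}. t ab) = (\<Sum>ab\<in>?A \<times> ?B. t ab)"
      using fA fB by (intro sum.group) auto
    have step3: "(\<Sum>ab\<in>?A \<times> ?B. t ab) = (\<Sum>a\<in>?A. c a * mev x a) * (\<Sum>b\<in>?B. d b * mev x b)"
      unfolding t_def sum_product sum.cartesian_product by (intro sum.cong) (auto simp: mono_add)
    obtain u where u: "ps_eval p c x - (\<Sum>a\<in>?A. c a * mev x a) = P ^ n * u"
      using ev_approx[OF assms(1) fA, of n x] by (auto elim: dvdE)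
    obtain w where w: "ps_eval p d x - (\<Sum>a\<in>?B. d a * mev x a) = P ^ n * w"
      using ev_approx[OF assms(2) fB, of n x] by (auto elim: dvdE)
    have "ps_eval p c x * ps_eval p d x - (\<Sum>a\<in>?A. c a * mev x a) * (\<Sum>b\<in>?B. d b * mev x b)
       = P ^ n * (u * ps_eval p d x + (\<Sum>a\<in>?A. c a * mev x a) * w)"
      using u w by (simp add: algebra_simps eq_diff_eq)
    then have step4: "P ^ n dvd ps_eval p c x * ps_eval p d x - (\<Sum>ab\<in>?A \<times> ?B. t ab)"
      unfolding step3 by simp
    have "P ^ n dvd (ps_eval p c x * ps_eval p d x - (\<Sum>ab\<in>?A \<times> ?B. t ab)) -
       ((\<Sum>m\<in>?G. ps_mult c d m * mev x m) - (\<Sum>ab\<in>?A \<times> ?B. t ab))"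
      using dvd_diff[OF step4 step1[unfolded step2]] .
    then show "P ^ n dvd (ps_eval p c x * ps_eval p d x - (\<Sum>m\<in>?G. ps_mult c d m * mev x m))"
      by (simp add: algebra_simps)
  qed
  then show "ps_eval p (ps_mult c d) x = ps_eval p c x * ps_eval p d x" "restricted p (ps_mult c d)"
    by (rule ev_eqI)+
qed

lemma ev_one: fixes x :: "nat \<Rightarrow> 'a" shows "ps_eval p ps_one x = 1" "restricted p (ps_one :: 'a pser)"
proof -
  have "{m. ps_one m \<noteq> (0::'a)} \<subseteq> {0}" unfolding ps_one_def by auto
  then show "ps_eval p ps_one x = 1" "restricted p (ps_one :: 'a pser)"
    using ev_fin(1)[where K="{0}" and c=ps_one and x=x] ev_fin(2)[where K="{0}" and c=ps_one]
    by (auto simp: ps_one_def)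
qed

lemma ev_var: fixes x :: "nat \<Rightarrow> 'a" shows "ps_eval p (ps_var j) x = x j" "restricted p (ps_var j :: 'a pser)"
proof -
  have "{m. ps_var j m \<noteq> (0::'a)} \<subseteq> {Poly_Mapping.single j 1}" unfolding ps_var_def by auto
  then show "ps_eval p (ps_var j) x = x j" "restricted p (ps_var j :: 'a pser)"
    using ev_fin(1)[where K="{Poly_Mapping.single j 1}" and c="ps_var j" and x=x]
      ev_fin(2)[where K="{Poly_Mapping.single j 1}" and c="ps_var j"] by (auto simp: ps_var_def)
qed

lemma ev_pow:
  fixes c d :: "'a pser" and x :: "nat \<Rightarrow> 'a"
  assumes "restricted p c"
  shows "ps_eval p (ps_pow c k) x = ps_eval p c x ^ k" "restricted p (ps_pow c k)"
proof -
  have "ps_eval p (ps_pow c k) x = ps_eval p c x ^ k \<and> restricted p (ps_pow c k)"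
    by (induction k) (auto simp: ps_pow_def ev_one ev_mult assms)
  then show "ps_eval p (ps_pow c k) x = ps_eval p c x ^ k" "restricted p (ps_pow c k)" by auto
qed

end


context witt begin

lemma restricted_coeff_phi:
  fixes c :: "'a pser" assumes "restricted p c" shows "restricted p (coeff_phi phi c)"
proof -
  have "S n (coeff_phi phi c) \<subseteq> S n c" for n unfolding S_def coeff_phi_def using phi_Pdvd by blast
  then show ?thesis using assms unfolding restricted_S using finite_subset by blast
qed

lemma ev_coeff_phi:
  fixes c :: "'a pser" and x :: "nat \<Rightarrow> 'a"
  assumes "restricted p c"
  shows "ps_eval p (coeff_phi phi c) (\<lambda>j. phi (x j)) = phi (ps_eval p c x)"
proof (rule ev_eqI)
  fix n
  show "\<exists>G. finite G \<and> S n (coeff_phi phi c) \<subseteq> G \<and>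
    P ^ n dvd (phi (ps_eval p c x) - (\<Sum>m\<in>G. coeff_phi phi c m * mev (\<lambda>j. phi (x j)) m))"
  proof (intro exI conjI)
    show "finite (S n c)" using assms restricted_S by blast
    show "S n (coeff_phi phi c) \<subseteq> S n c" unfolding S_def coeff_phi_def using phi_Pdvd by blast
    have "P ^ n dvd phi (ps_eval p c x - (\<Sum>m\<in>S n c. c m * mev x m))"
      using ev_approx[OF assms \<open>finite (S n c)\<close> subset_refl, of x] by (rule phi_Pdvd)
    then show "P ^ n dvd (phi (ps_eval p c x) - (\<Sum>m\<in>S n c. coeff_phi phi c m * mev (\<lambda>j. phi (x j)) m))"
      by (simp add: phi_sum coeff_phi_def mono_phi)
  qed
qed

abbreviation mp :: "(nat \<Rightarrow>\<^sub>0 nat) \<Rightarrow> (nat \<Rightarrow>\<^sub>0 nat)" where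
  "mp \<equiv> Poly_Mapping.map (\<lambda>k. p * k)"

lemma lookup_mp: "Poly_Mapping.lookup (mp m) j = p * Poly_Mapping.lookup m j"
  by (simp add: lookup_map_pm)

lemma inj_mp: "inj mp"
proof (rule injI)
  fix a b assume "mp a = mp b"
  then have "p * Poly_Mapping.lookup a j = p * Poly_Mapping.lookup b j" for j
    by (metis lookup_mp)
  then show "a = b" using p_pos by (intro poly_mapping_eqI) simp
qed

lemma pow_subst_mp: "pow_subst p c (mp m) = c m"
proof -
  have "mp m' = mp m \<longleftrightarrow> m' = m" for m' using inj_mp by (meson injD)
  then have eq: "{m'. c m' \<noteq> 0 \<and> mp m' = mp m} = (if c m = 0 then {} else {m})"
    by auto
  show ?thesis unfolding pow_subst_def eq by simp
qed

lemma pow_subst_notin: "n \<notin> range mp \<Longrightarrow> pow_subst p c n = 0"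
proof -
  assume "n \<notin> range mp"
  then have eq: "{m'. c m' \<noteq> 0 \<and> mp m' = n} = {}" by auto
  show ?thesis unfolding pow_subst_def eq by simp
qed

lemma ev_pow_subst:
  fixes c :: "'a pser" and x :: "nat \<Rightarrow> 'a"
  assumes "restricted p c"
  shows "ps_eval p (pow_subst p c) x = ps_eval p c (\<lambda>j. x j ^ p)" "restricted p (pow_subst p c)"
proof -
  have "\<exists>G. finite G \<and> S n (pow_subst p c) \<subseteq> G \<and>
    P ^ n dvd (ps_eval p c (\<lambda>j. x j ^ p) - (\<Sum>m\<in>G. pow_subst p c m * mev x m))" for n
  proof (intro exI conjI)
    have f: "finite (S n c)" using assms restricted_S by blast
    show "finite (mp ` S n c)" using f by simp
    show "S n (pow_subst p c) \<subseteq> mp ` S n c"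
    proof
      fix m assume m: "m \<in> S n (pow_subst p c)"
      have "m \<in> range mp"
      proof (rule ccontr)
        assume "m \<notin> range mp"
        then have "pow_subst p c m = 0" by (rule pow_subst_notin)
        then show False using m unfolding S_def by simp
      qed
      then obtain m0 where "m = mp m0" by blast
      then show "m \<in> mp ` S n c" using m by (simp add: S_def pow_subst_mp)
    qed
    have "(\<Sum>m\<in>mp ` S n c. pow_subst p c m * mev x m) = (\<Sum>m\<in>S n c. c m * mev (\<lambda>j. x j ^ p) m)"
      by (subst sum.reindex) (simp_all add: inj_on_subset[OF inj_mp] pow_subst_mp mono_pow_map)
    then show "P ^ n dvd (ps_eval p c (\<lambda>j. x j ^ p) - (\<Sum>m\<in>mp ` S n c. pow_subst p c m * mev x m))"
      using ev_approx[OF assms f subset_refl] by simp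
  qed
  then show "ps_eval p (pow_subst p c) x = ps_eval p c (\<lambda>j. x j ^ p)" "restricted p (pow_subst p c)"
    by (rule ev_eqI)+
qed

lemma restricted_deriv:
  fixes h :: "'a pser" assumes "restricted p h" shows "restricted p (ps_deriv j h)"
proof -
  have "S n (ps_deriv j h) \<subseteq> (\<lambda>m. m + Poly_Mapping.single j 1) -` S n h" for n
    unfolding S_def ps_deriv_def by (auto simp del: of_nat_Suc)
  moreover have "finite ((\<lambda>m. m + Poly_Mapping.single j 1) -` S n h)" for n
    using assms restricted_S by (intro finite_vimageI) (auto simp: inj_def)
  ultimately show ?thesis unfolding restricted_S using finite_subset by blast
qed

lemma ev_div:
  fixes h :: "'a pser" and x :: "nat \<Rightarrow> 'a"
  assumes "restricted p h" "\<And>n. P dvd h n"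
  shows "P * ps_eval p (\<lambda>n. div_p p (h n)) x = ps_eval p h x" "restricted p (\<lambda>n. div_p p (h n))"
proof -
  let ?q = "\<lambda>n. div_p p (h n)"
  have hq: "h = ps_smul P ?q" unfolding ps_smul_def using div_p_mult[OF assms(2)] by simp
  have "S n ?q \<subseteq> S (Suc n) h" for n
  proof
    fix m assume m: "m \<in> S n ?q"
    show "m \<in> S (Suc n) h"
    proof (rule ccontr)
      assume "m \<notin> S (Suc n) h"
      then have "P ^ Suc n dvd P * ?q m" using div_p_mult[OF assms(2)] unfolding S_def by simp
      then have "P ^ n dvd ?q m" by (rule dvd_cancelP_pow)
      then show False using m unfolding S_def by simp
    qed
  qed
  then show r: "restricted p ?q" using assms(1) unfolding restricted_S using finite_subset by blast
  have "ps_eval p h x = ps_eval p (ps_smul P ?q) x" using hq by (rule arg_cong)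
  then show "P * ps_eval p ?q x = ps_eval p h x" using ev_smul(1)[OF r, of P x] by simp
qed

end


lemma ps_pow_0[simp]: "ps_pow c 0 = ps_one" by (simp add: ps_pow_def)
lemma ps_pow_Suc: "ps_pow c (Suc k) = ps_mult c (ps_pow c k)" by (simp add: ps_pow_def)

lemma mult_nz:
  assumes "ps_mult c d m \<noteq> 0"
  shows "\<exists>a b. a + b = m \<and> c a \<noteq> 0 \<and> d b \<noteq> 0"
proof -
  from assms have "(\<Sum>(a, b)\<in>{(a, b). a + b = m}. c a * d b) \<noteq> 0" unfolding ps_mult_def by simp
  then obtain ab where "ab \<in> {(a, b). a + b = m}" "(\<lambda>(a, b). c a * d b) ab \<noteq> 0"
    by (meson sum.not_neutral_contains_not_neutral)
  then show ?thesis by (cases ab) (auto simp del: mult_eq_0_iff intro!: exI)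
qed

definition fs :: "'a::zero pser \<Rightarrow> bool" where "fs c \<longleftrightarrow> finite {m. c m \<noteq> 0}"

lemma fs_one: "fs (ps_one :: 'a::comm_ring_1 pser)"
proof -
  have "{m. (ps_one :: 'a pser) m \<noteq> 0} \<subseteq> {0}" by (auto simp: ps_one_def)
  then show ?thesis unfolding fs_def using finite_subset by blast
qed

lemma fs_var: "fs (ps_var j :: 'a::comm_ring_1 pser)"
proof -
  have "{m. (ps_var j :: 'a pser) m \<noteq> 0} \<subseteq> {Poly_Mapping.single j 1}" by (auto simp: ps_var_def)
  then show ?thesis unfolding fs_def using finite_subset by blast
qed

lemma fs_smul: "fs c \<Longrightarrow> fs (ps_smul a c)"
  unfolding fs_def ps_smul_def by (rule finite_subset[rotated]) auto

lemma fs_add: "fs c \<Longrightarrow> fs d \<Longrightarrow> fs (ps_add c d)"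
proof -
  assume a: "fs c" "fs d"
  have "{m. ps_add c d m \<noteq> 0} \<subseteq> {m. c m \<noteq> 0} \<union> {m. d m \<noteq> 0}" unfolding ps_add_def by auto
  then show ?thesis using a unfolding fs_def by (meson finite_UnI finite_subset)
qed

lemma fs_mult: assumes "fs c" "fs d" shows "fs (ps_mult c d)"
proof -
  have "{m. ps_mult c d m \<noteq> 0} \<subseteq> (\<lambda>(a, b). a + b) ` ({m. c m \<noteq> 0} \<times> {m. d m \<noteq> 0})"
  proof
    fix m assume "m \<in> {m. ps_mult c d m \<noteq> 0}"
    then obtain a b where "a + b = m" "c a \<noteq> 0" "d b \<noteq> 0" using mult_nz by blast
    then show "m \<in> (\<lambda>(a, b). a + b) ` ({m. c m \<noteq> 0} \<times> {m. d m \<noteq> 0})" by force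
  qed
  then show ?thesis using assms unfolding fs_def by (meson finite_SigmaI finite_imageI finite_subset)
qed

lemma fs_pow: "fs c \<Longrightarrow> fs (ps_pow c k)"
  by (induction k) (simp_all add: ps_pow_Suc fs_one fs_mult)

context witt begin

lemma fs_restricted: fixes c :: "'a pser" shows "fs c \<Longrightarrow> restricted p c"
  unfolding fs_def by (rule restricted_fin)

lemma fs_ev: fixes c :: "'a pser" assumes "fs c" "finite K" "{m. c m \<noteq> 0} \<subseteq> K"
  shows "ps_eval p c x = (\<Sum>m\<in>K. c m * mev x m)"
  using ev_fin(1)[OF assms(2,3)] .

lemma fs_frob_var: "fs (frob_var p j :: 'a pser)"
  unfolding frob_var_def by (intro fs_add fs_pow fs_smul fs_var)

lemma ev_frob_var: fixes x :: "nat \<Rightarrow> 'a"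
  shows "ps_eval p (frob_var p j) x = x j ^ p + P * x (Suc j)"
  unfolding frob_var_def
  by (simp add: ev_add ev_pow ev_smul ev_var)

definition FM :: "(nat \<Rightarrow> nat) \<Rightarrow> nat list \<Rightarrow> 'a pser" where
  "FM e L = foldr (\<lambda>j acc. ps_mult (ps_pow (frob_var p j) (e j)) acc) L ps_one"

lemma FM_Cons: "FM e (j # L) = ps_mult (ps_pow (frob_var p j) (e j)) (FM e L)"
  unfolding FM_def by simp

lemma fs_FM: "fs (FM e L)"
  by (induction L) (auto simp: FM_def fs_one fs_mult fs_pow fs_frob_var)

lemma ev_FM: fixes x :: "nat \<Rightarrow> 'a"
  shows "ps_eval p (FM e L) x = (\<Prod>j\<leftarrow>L. (x j ^ p + P * x (Suc j)) ^ e j)"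
proof (induction L)
  case Nil then show ?case by (simp add: FM_def ev_one)
next
  case (Cons j L)
  have r1: "restricted p (ps_pow (frob_var p j) (e j) :: 'a pser)"
    by (intro fs_restricted fs_pow fs_frob_var)
  have r2: "restricted p (FM e L)" by (intro fs_restricted fs_FM)
  show ?case unfolding FM_Cons ev_mult[OF r1 r2] Cons
    by (simp add: ev_pow fs_restricted fs_frob_var ev_frob_var)
qed

lemma frob_mono_FM: "frob_mono p m = FM (Poly_Mapping.lookup m) (sorted_list_of_set (Poly_Mapping.keys m))"
  unfolding frob_mono_def FM_def ..

lemma fs_frob_mono: "fs (frob_mono p m :: 'a pser)"
  unfolding frob_mono_FM by (rule fs_FM)

lemma ev_frob_mono: fixes x :: "nat \<Rightarrow> 'a"
  shows "ps_eval p (frob_mono p m) x = mev (\<lambda>j. x j ^ p + P * x (Suc j)) m"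
  unfolding frob_mono_FM ev_FM mono_eval_def
  by (simp add: prod.distinct_set_conv_list[symmetric])

end


context witt begin

lemma var_nz: "(ps_var j :: 'a pser) n \<noteq> 0 \<Longrightarrow> n = Poly_Mapping.single j 1"
  unfolding ps_var_def by (simp split: if_splits)

lemma powvar_nz: "(ps_pow (ps_var j) k :: 'a pser) n \<noteq> 0 \<Longrightarrow> n = Poly_Mapping.single j k"
proof (induction k arbitrary: n)
  case 0 then show ?case by (simp add: ps_one_def split: if_splits)
next
  case (Suc k)
  then obtain a b where "a + b = n" "(ps_var j :: 'a pser) a \<noteq> 0" "ps_pow (ps_var j) k b \<noteq> (0::'a)"
    using mult_nz[of "ps_var j" "ps_pow (ps_var j) k" n] by (auto simp: ps_pow_Suc)
  then show ?case using Suc.IH var_nz by (metis add.commute plus_1_eq_Suc single_add)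
qed

lemma fv_nz: "(frob_var p j :: 'a pser) n \<noteq> 0 \<Longrightarrow>
   1 \<le> Poly_Mapping.lookup n j + Poly_Mapping.lookup n (Suc j) \<and> Poly_Mapping.keys n \<subseteq> {j, Suc j}"
proof -
  assume "(frob_var p j :: 'a pser) n \<noteq> 0"
  then have "(ps_pow (ps_var j) p :: 'a pser) n \<noteq> 0 \<or> (ps_var (Suc j) :: 'a pser) n \<noteq> 0"
    unfolding frob_var_def ps_add_def ps_smul_def by auto
  then have "n = Poly_Mapping.single j p \<or> n = Poly_Mapping.single (Suc j) 1"
    using powvar_nz var_nz by blast
  then show ?thesis using p_pos by (auto simp: lookup_single)
qed

lemma powfv_nz: "(ps_pow (frob_var p j) k :: 'a pser) n \<noteq> 0 \<Longrightarrow>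
   k \<le> Poly_Mapping.lookup n j + Poly_Mapping.lookup n (Suc j) \<and> Poly_Mapping.keys n \<subseteq> {j, Suc j}"
proof (induction k arbitrary: n)
  case 0 then show ?case by (simp add: ps_one_def split: if_splits)
next
  case (Suc k)
  have "ps_mult (frob_var p j) (ps_pow (frob_var p j) k) n \<noteq> (0::'a)" using Suc.prems unfolding ps_pow_Suc .
  from mult_nz[OF this] obtain a b where ab: "a + b = n" "(frob_var p j :: 'a pser) a \<noteq> 0" "ps_pow (frob_var p j) k b \<noteq> (0::'a)"
    by metis
  have kn: "Poly_Mapping.keys n \<subseteq> Poly_Mapping.keys a \<union> Poly_Mapping.keys b" unfolding ab(1)[symmetric] by (rule keys_add)
  note i1 = Suc.IH[OF ab(3)] and i2 = fv_nz[OF ab(2)]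
  have "Poly_Mapping.lookup n j + Poly_Mapping.lookup n (Suc j) =
    (Poly_Mapping.lookup a j + Poly_Mapping.lookup a (Suc j)) + (Poly_Mapping.lookup b j + Poly_Mapping.lookup b (Suc j))"
    using ab(1) by (auto simp: lookup_add)
  then have "Suc k \<le> Poly_Mapping.lookup n j + Poly_Mapping.lookup n (Suc j)" using i1 i2 by linarith
  moreover have "Poly_Mapping.keys n \<subseteq> {j, Suc j}" using kn i1 i2 by blast
  ultimately show ?case by blast
qed

lemma FM_nz: "(FM e L :: 'a pser) n \<noteq> 0 \<Longrightarrow>
   (\<forall>i\<in>set L. e i \<le> Poly_Mapping.lookup n i + Poly_Mapping.lookup n (Suc i)) \<and>
   Poly_Mapping.keys n \<subseteq> (\<Union>j\<in>set L. {j, Suc j})"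
proof (induction L arbitrary: n)
  case Nil then show ?case by (simp add: FM_def ps_one_def split: if_splits)
next
  case (Cons j L)
  have "ps_mult (ps_pow (frob_var p j) (e j)) (FM e L) n \<noteq> (0::'a)" using Cons.prems unfolding FM_Cons .
  from mult_nz[OF this] obtain a b where ab: "a + b = n" "(ps_pow (frob_var p j) (e j) :: 'a pser) a \<noteq> 0" "(FM e L :: 'a pser) b \<noteq> 0"
    by metis
  have kn: "Poly_Mapping.keys n \<subseteq> Poly_Mapping.keys a \<union> Poly_Mapping.keys b" unfolding ab(1)[symmetric] by (rule keys_add)
  note i1 = Cons.IH[OF ab(3)] and i2 = powfv_nz[OF ab(2)]
  have lk: "Poly_Mapping.lookup n i = Poly_Mapping.lookup a i + Poly_Mapping.lookup b i" for i
    using ab(1) by (auto simp: lookup_add)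
  have "e i \<le> Poly_Mapping.lookup n i + Poly_Mapping.lookup n (Suc i)" if "i \<in> set (j # L)" for i
  proof (cases "i = j")
    case True then show ?thesis using i2 lk[of i] lk[of "Suc i"] by simp
  next
    case False then have "i \<in> set L" using that by simp
    then show ?thesis using i1 lk[of i] lk[of "Suc i"] by fastforce
  qed
  moreover have "Poly_Mapping.keys n \<subseteq> (\<Union>j\<in>set (j # L). {j, Suc j})" using kn i1 i2 by auto
  ultimately show ?case by blast
qed

lemma frob_mono_nz: "(frob_mono p m :: 'a pser) n \<noteq> 0 \<Longrightarrow>
   (\<forall>i\<in>Poly_Mapping.keys m. Poly_Mapping.lookup m i \<le> Poly_Mapping.lookup n i + Poly_Mapping.lookup n (Suc i)) \<and>
   Poly_Mapping.keys n \<subseteq> (\<Union>j\<in>Poly_Mapping.keys m. {j, Suc j})"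
  unfolding frob_mono_FM using FM_nz by (metis finite_keys set_sorted_list_of_set)

lemma finite_M: "finite {m. (frob_mono p m :: 'a pser) n \<noteq> 0}"
proof -
  let ?K = "Poly_Mapping.keys n \<union> Suc -` Poly_Mapping.keys n"
  let ?B = "\<lambda>i. Poly_Mapping.lookup n i + Poly_Mapping.lookup n (Suc i)"
  have "{m. (frob_mono p m :: 'a pser) n \<noteq> 0} \<subseteq> {a. Poly_Mapping.keys a \<subseteq> ?K \<and> (\<forall>i\<in>?K. Poly_Mapping.lookup a i \<le> ?B i)}"
  proof
    fix m assume "m \<in> {m. (frob_mono p m :: 'a pser) n \<noteq> 0}"
    then have nz: "(frob_mono p m :: 'a pser) n \<noteq> 0" by simp
    note b = frob_mono_nz[OF nz]
    have bound: "Poly_Mapping.lookup m i \<le> ?B i" for i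
    proof (cases "i \<in> Poly_Mapping.keys m")
      case True then show ?thesis using b by blast
    next
      case False then have "Poly_Mapping.lookup m i = 0" by (simp add: in_keys_iff)
      then show ?thesis by simp
    qed
    have "Poly_Mapping.keys m \<subseteq> ?K"
    proof
      fix i assume i: "i \<in> Poly_Mapping.keys m"
      then have "Poly_Mapping.lookup m i \<noteq> 0" by (simp add: in_keys_iff)
      then have "?B i \<noteq> 0" using bound[of i] by linarith
      then have "Poly_Mapping.lookup n i \<noteq> 0 \<or> Poly_Mapping.lookup n (Suc i) \<noteq> 0" by linarith
      then show "i \<in> ?K" by (auto simp: in_keys_iff)
    qed
    then show "m \<in> {a. Poly_Mapping.keys a \<subseteq> ?K \<and> (\<forall>i\<in>?K. Poly_Mapping.lookup a i \<le> ?B i)}"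
      using bound by blast
  qed
  moreover have "finite ?K" by (intro finite_UnI finite_keys finite_vimageI) simp_all
  ultimately show ?thesis using finite_bounded_pm[of ?K ?B] finite_subset by blast
qed

end


context witt begin

lemma ev_phi:
  fixes g :: "'a pser" and x :: "nat \<Rightarrow> 'a"
  assumes g: "restricted p g"
  shows "ps_eval p (ps_phi p phi g) x = ps_eval p (coeff_phi phi g) (\<lambda>j. x j ^ p + P * x (Suc j))"
    "restricted p (ps_phi p phi g)"
proof -
  let ?y = "\<lambda>j. x j ^ p + P * x (Suc j)"
  let ?F = "\<lambda>m. (frob_mono p m :: 'a pser)"
  let ?M = "\<lambda>n. {m. g m \<noteq> 0 \<and> ?F m n \<noteq> 0}"
  have finM: "finite (?M n)" for n
    using finite_M[of n] by (rule finite_subset[rotated]) auto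
  have "\<exists>G. finite G \<and> S k (ps_phi p phi g) \<subseteq> G \<and>
    P ^ k dvd (ps_eval p (coeff_phi phi g) ?y - (\<Sum>n\<in>G. ps_phi p phi g n * mev x n))" for k
  proof -
    let ?A = "S k g"
    let ?N = "\<Union>m\<in>?A. {n. ?F m n \<noteq> 0}"
    have fA: "finite ?A" using g restricted_S by blast
    have fN: "finite ?N" using fA fs_frob_mono unfolding fs_def by blast
    have sub: "S k (ps_phi p phi g) \<subseteq> ?N"
    proof
      fix n assume "n \<in> S k (ps_phi p phi g)"
      then have "\<not> P ^ k dvd ps_phi p phi g n" unfolding S_def by simp
      then have "\<not> P ^ k dvd (\<Sum>m\<in>?M n. phi (g m) * ?F m n)" unfolding ps_phi_def .
      then obtain m where m: "m \<in> ?M n" "\<not> P ^ k dvd phi (g m) * ?F m n"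
        by (meson dvd_sum)
      have "\<not> P ^ k dvd g m"
      proof
        assume "P ^ k dvd g m"
        then have "P ^ k dvd phi (g m) * ?F m n" by (intro dvd_mult2 phi_Pdvd)
        then show False using m(2) by simp
      qed
      then have "m \<in> ?A" unfolding S_def by simp
      moreover have "?F m n \<noteq> 0" using m(1) by simp
      ultimately show "n \<in> ?N" by blast
    qed
    define T where "T n = (\<Sum>m\<in>?A. phi (g m) * ?F m n)" for n
    have d1: "P ^ k dvd ps_phi p phi g n - T n" for n
      unfolding ps_phi_def T_def
    proof (rule tail_gen)
      show "finite (?M n)" by (rule finM)
      show "finite ?A" by (rule fA)
      fix m assume "m \<in> (?M n - ?A) \<union> (?A - ?M n)"
      then consider "m \<notin> ?A" | "g m = 0 \<or> ?F m n = 0" by blast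
      then show "P ^ k dvd phi (g m) * ?F m n"
      proof cases
        case 1 then show ?thesis unfolding S_def using phi_Pdvd by auto
      qed auto
    qed
    have d2: "P ^ k dvd (\<Sum>n\<in>?N. ps_phi p phi g n * mev x n) - (\<Sum>n\<in>?N. T n * mev x n)"
      unfolding sum_subtractf[symmetric] left_diff_distrib[symmetric]
      using d1 by (intro dvd_sum dvd_mult2)
    have e3: "(\<Sum>n\<in>?N. T n * mev x n) = (\<Sum>m\<in>?A. coeff_phi phi g m * mev ?y m)"
    proof -
      have "(\<Sum>n\<in>?N. T n * mev x n) = (\<Sum>m\<in>?A. phi (g m) * (\<Sum>n\<in>?N. ?F m n * mev x n))"
        unfolding T_def sum_distrib_right sum_distrib_left
        by (subst sum.swap) (simp add: mult.assoc)
      also have "\<dots> = (\<Sum>m\<in>?A. phi (g m) * ps_eval p (?F m) x)"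
      proof (intro sum.cong refl arg_cong[where f = "\<lambda>t. phi (g _) * t"])
        fix m assume "m \<in> ?A"
        then show "(\<Sum>n\<in>?N. ?F m n * mev x n) = ps_eval p (?F m) x"
        proof -
          have "{n. ?F m n \<noteq> 0} \<subseteq> ?N" using \<open>m \<in> ?A\<close> by blast
          from fs_ev[OF fs_frob_mono fN this, of x] show ?thesis by simp
        qed
      qed
      also have "\<dots> = (\<Sum>m\<in>?A. coeff_phi phi g m * mev ?y m)"
        by (simp add: ev_frob_mono coeff_phi_def)
      finally show ?thesis .
    qed
    have d4: "P ^ k dvd ps_eval p (coeff_phi phi g) ?y - (\<Sum>m\<in>?A. coeff_phi phi g m * mev ?y m)"
    proof (rule ev_approx[OF restricted_coeff_phi[OF g] fA])
      show "S k (coeff_phi phi g) \<subseteq> ?A" unfolding S_def coeff_phi_def using phi_Pdvd by blast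
    qed
    have "P ^ k dvd (ps_eval p (coeff_phi phi g) ?y - (\<Sum>n\<in>?N. T n * mev x n)) -
       ((\<Sum>n\<in>?N. ps_phi p phi g n * mev x n) - (\<Sum>n\<in>?N. T n * mev x n))"
      using d4 d2 unfolding e3 by (rule dvd_diff)
    then have "P ^ k dvd (ps_eval p (coeff_phi phi g) ?y - (\<Sum>n\<in>?N. ps_phi p phi g n * mev x n))"
      by (simp add: algebra_simps)
    then show ?thesis using fN sub by blast
  qed
  then show "ps_eval p (ps_phi p phi g) x = ps_eval p (coeff_phi phi g) ?y" "restricted p (ps_phi p phi g)"
    by (rule ev_eqI)+
qed

end


lemma frob_ring:
  fixes a b :: "'r::comm_ring_1" assumes "prime p"
  shows "\<exists>c. (a + b) ^ p = a ^ p + b ^ p + of_nat p * c"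
proof -
  have p1: "p \<ge> 1" using assms prime_ge_1_nat by blast
  define f where "f k = of_nat (p choose k) * a ^ k * b ^ (p - k)" for k
  have "(a + b) ^ p = (\<Sum>k\<le>p. f k)" unfolding f_def by (rule binomial_ring)
  also have "{..p} = insert 0 (insert p {1..<p})" using p1 by auto
  also have "(\<Sum>k\<in>insert 0 (insert p {1..<p}). f k) = f 0 + (f p + (\<Sum>k\<in>{1..<p}. f k))"
    using p1 by (simp add: sum.insert)
  also have "(\<Sum>k\<in>{1..<p}. f k) = of_nat p * (\<Sum>k\<in>{1..<p}. of_nat ((p choose k) div p) * a ^ k * b ^ (p - k))"
    unfolding sum_distrib_left
  proof (rule sum.cong[OF refl])
    fix k assume k: "k \<in> {1..<p}"
    then have "p dvd (p choose k)" using assms by (intro dvd_choose_prime) auto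
    then have "p choose k = p * ((p choose k) div p)" by simp
    then show "f k = of_nat p * (of_nat ((p choose k) div p) * a ^ k * b ^ (p - k))"
      unfolding f_def by (metis (no_types) mult.assoc of_nat_mult)
  qed
  finally have "(a + b) ^ p = f 0 + (f p + of_nat p * (\<Sum>k\<in>{1..<p}. of_nat ((p choose k) div p) * a ^ k * b ^ (p - k)))" .
  then have "(a + b) ^ p = a ^ p + b ^ p + of_nat p * (\<Sum>k\<in>{1..<p}. of_nat ((p choose k) div p) * a ^ k * b ^ (p - k))"
    unfolding f_def by (simp add: algebra_simps)
  then show ?thesis by blast
qed

lemma ps_mult_lookup:
  fixes A B :: "(nat \<Rightarrow>\<^sub>0 nat) \<Rightarrow>\<^sub>0 'a::comm_ring_1"
  shows "ps_mult (Poly_Mapping.lookup A) (Poly_Mapping.lookup B) = Poly_Mapping.lookup (A * B)"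
proof
  fix k
  have fA: "finite {a. Poly_Mapping.lookup A a \<noteq> 0}" and fB: "finite {a. Poly_Mapping.lookup B a \<noteq> 0}"
    using finite_keys[of A] finite_keys[of B] by (simp_all add: keys.rep_eq)
  have "Poly_Mapping.lookup (A * B) k = prod_fun (Poly_Mapping.lookup A) (Poly_Mapping.lookup B) k"
    by (simp add: times_poly_mapping.rep_eq)
  also have "\<dots> = (\<Sum>(a, b). Poly_Mapping.lookup A a * Poly_Mapping.lookup B b when k = a + b)"
    by (rule prod_fun_unfold_prod[OF fA fB])
  also have "\<dots> = (\<Sum>ab\<in>{(a, b). a + b = k}. (\<lambda>(a, b). Poly_Mapping.lookup A a * Poly_Mapping.lookup B b when k = a + b) ab)"
    by (rule Sum_any.expand_superset) (auto simp: finite_decomp when_def split: if_splits)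
  also have "\<dots> = ps_mult (Poly_Mapping.lookup A) (Poly_Mapping.lookup B) k"
    unfolding ps_mult_def by (intro sum.cong) (auto simp: when_def)
  finally show "ps_mult (Poly_Mapping.lookup A) (Poly_Mapping.lookup B) k = Poly_Mapping.lookup (A * B) k" by simp
qed

lemma ps_pow_lookup:
  fixes A :: "(nat \<Rightarrow>\<^sub>0 nat) \<Rightarrow>\<^sub>0 'a::comm_ring_1"
  shows "ps_pow (Poly_Mapping.lookup A) k = Poly_Mapping.lookup (A ^ k)"
proof (induction k)
  case 0 then show ?case by (auto simp: ps_one_def lookup_one when_def)
next
  case (Suc k) then show ?case by (simp add: ps_pow_Suc ps_mult_lookup)
qed

lemma single_pow: "(Poly_Mapping.single t v :: (nat \<Rightarrow>\<^sub>0 nat) \<Rightarrow>\<^sub>0 'a::comm_ring_1) ^ k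
   = Poly_Mapping.single (Poly_Mapping.map (\<lambda>i. k * i) t) (v ^ k)"
proof (induction k)
  case 0
  have "Poly_Mapping.map (\<lambda>i. 0 * i) t = 0" by (intro poly_mapping_eqI) (simp add: lookup_map_pm)
  then show ?case by simp
next
  case (Suc k)
  have "t + Poly_Mapping.map (\<lambda>i. k * i) t = Poly_Mapping.map (\<lambda>i. Suc k * i) t"
    by (intro poly_mapping_eqI) (simp add: lookup_map_pm lookup_add)
  then show ?case using Suc by (simp add: mult_single)
qed

lemma lookup_ofnat_mult: "Poly_Mapping.lookup (of_nat n * (Z :: (nat \<Rightarrow>\<^sub>0 nat) \<Rightarrow>\<^sub>0 'a::comm_ring_1)) k = of_nat n * Poly_Mapping.lookup Z k"
proof -
  have "of_nat n * Z = Poly_Mapping.map ((*) (of_nat n)) Z"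
    by (simp add: mult_map_scale_conv_mult)
  then show ?thesis by (simp add: lookup_map_pm)
qed


context witt begin

lemma pow_subst_cases:
  obtains m0 where "n = mp m0" | "n \<notin> range mp"
  by blast

lemma mp_eq_iff: "mp a = mp b \<longleftrightarrow> a = b"
  using inj_mp by (meson injD)

lemma frob_fin:
  assumes "finite T"
  shows "\<forall>h :: 'a pser. {m. h m \<noteq> 0} \<subseteq> T \<longrightarrow> (\<forall>n. P dvd ps_pow h p n - pow_subst p (\<lambda>m. h m ^ p) n)"
  using assms
proof (induction T rule: finite_induct)
  case empty
  show ?case
  proof (intro allI impI)
    fix h :: "'a pser" and n assume "{m. h m \<noteq> 0} \<subseteq> {}"
    then have h: "h = (\<lambda>_. 0)" by auto
    obtain p' where p': "p = Suc p'" using p_pos by (cases p) auto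
    have "ps_pow h p n = 0" unfolding p' ps_pow_Suc h ps_mult_def by simp
    moreover have "pow_subst p (\<lambda>m. h m ^ p) n = 0" using p_pos unfolding h pow_subst_def by (simp add: zero_power)
    ultimately show "P dvd ps_pow h p n - pow_subst p (\<lambda>m. h m ^ p) n" by simp
  qed
next
  case (insert t T)
  show ?case
  proof (intro allI impI)
    fix h :: "'a pser" and n assume sub: "{m. h m \<noteq> 0} \<subseteq> insert t T"
    define h' where "h' = h(t := 0)"
    have sub': "{m. h' m \<noteq> 0} \<subseteq> T" using sub unfolding h'_def by auto
    have IH: "P dvd ps_pow h' p n - pow_subst p (\<lambda>m. h' m ^ p) n" using insert.IH sub' by blast
    have fh': "finite {m. h' m \<noteq> 0}" using sub' insert.hyps(1) finite_subset by blast
    define H' where "H' = Abs_poly_mapping h'"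
    have lH': "Poly_Mapping.lookup H' = h'" unfolding H'_def using fh' by simp
    define s where "s = Poly_Mapping.single t (h t)"
    have hH: "h = Poly_Mapping.lookup (H' + s)"
      by (rule ext) (simp add: lookup_add lH' s_def lookup_single when_def h'_def)
    obtain C where C: "(H' + s) ^ p = H' ^ p + s ^ p + of_nat p * C" using frob_ring[OF prime] by blast
    have "ps_pow h p n = Poly_Mapping.lookup ((H' + s) ^ p) n" unfolding hH ps_pow_lookup ..
    also have "\<dots> = ps_pow h' p n + (h t ^ p when mp t = n) + P * Poly_Mapping.lookup C n"
    proof -
      have a: "ps_pow h' p n = Poly_Mapping.lookup (H' ^ p) n" unfolding lH'[symmetric] ps_pow_lookup ..
      show ?thesis unfolding C a by (simp add: lookup_add lookup_ofnat_mult s_def single_pow lookup_single)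
    qed
    finally have e1: "ps_pow h p n = ps_pow h' p n + (h t ^ p when mp t = n) + P * Poly_Mapping.lookup C n" .
    have e2: "pow_subst p (\<lambda>m. h m ^ p) n = pow_subst p (\<lambda>m. h' m ^ p) n + (h t ^ p when mp t = n)"
    proof (cases n rule: pow_subst_cases)
      case (1 m0)
      then show ?thesis using p_pos by (cases "m0 = t") (auto simp: h'_def when_def mp_eq_iff pow_subst_mp zero_power)
    next
      case 2
      then show ?thesis by (auto simp: when_def pow_subst_notin)
    qed
    have "ps_pow h p n - pow_subst p (\<lambda>m. h m ^ p) n =
      (ps_pow h' p n - pow_subst p (\<lambda>m. h' m ^ p) n) + P * Poly_Mapping.lookup C n"
      unfolding e1 e2 by (simp add: algebra_simps)
    then show "P dvd ps_pow h p n - pow_subst p (\<lambda>m. h m ^ p) n" using IH by simp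
  qed
qed

lemma summands_down: "a + b = n' \<Longrightarrow> n' \<in> {x. \<exists>y. x + y = n} \<Longrightarrow> a \<in> {x. \<exists>y. x + y = (n :: nat \<Rightarrow>\<^sub>0 nat)} \<and> b \<in> {x. \<exists>y. x + y = n}"
  by (auto simp: add.assoc) (metis add.assoc add.commute)

lemma frob_cong:
  fixes g :: "'a pser"
  shows "P dvd ps_pow g p n - pow_subst p (\<lambda>m. g m ^ p) n"
proof -
  let ?D = "{x. \<exists>y. x + y = n}"
  define g' where "g' = (\<lambda>m. if m \<in> ?D then g m else 0)"
  have trunc: "\<forall>n'\<in>?D. ps_pow g k n' = ps_pow g' k n'" for k
  proof (induction k)
    case 0 then show ?case by simp
  next
    case (Suc k)
    show ?case
    proof
      fix n' assume n': "n' \<in> ?D"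
      show "ps_pow g (Suc k) n' = ps_pow g' (Suc k) n'"
        unfolding ps_pow_Suc ps_mult_def
      proof (rule sum.cong[OF refl])
        fix ab assume "ab \<in> {(a, b). a + b = n'}"
        then obtain a b where ab: "ab = (a, b)" "a + b = n'" by auto
        then have "a \<in> ?D" "b \<in> ?D" using summands_down[OF ab(2) n'] by auto
        then show "(case ab of (a, b) \<Rightarrow> g a * ps_pow g k b) = (case ab of (a, b) \<Rightarrow> g' a * ps_pow g' k b)"
          using Suc.IH ab(1) by (simp add: g'_def)
      qed
    qed
  qed
  have nD: "n \<in> ?D" by (metis (mono_tags) add_0_right mem_Collect_eq)
  have e1: "ps_pow g p n = ps_pow g' p n" using trunc nD by blast
  have e2: "pow_subst p (\<lambda>m. g m ^ p) n = pow_subst p (\<lambda>m. g' m ^ p) n"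
  proof (cases n rule: pow_subst_cases)
    case (1 m0)
    have "m0 + Poly_Mapping.map (\<lambda>i. (p - 1) * i) m0 = mp m0"
      using p_pos by (intro poly_mapping_eqI) (simp add: lookup_map_pm lookup_add algebra_simps)
    then have "m0 \<in> ?D" using 1 by blast
    then show ?thesis using 1 by (simp add: g'_def pow_subst_mp)
  next
    case 2 then show ?thesis by (simp add: pow_subst_notin)
  qed
  have "finite {m. g' m \<noteq> 0}" using finite_summands[of n] by (rule finite_subset[rotated]) (auto simp: g'_def)
  then have "P dvd ps_pow g' p n - pow_subst p (\<lambda>m. g' m ^ p) n" using frob_fin by blast
  then show ?thesis unfolding e1 e2 .
qed

end


definition mon :: "(nat \<Rightarrow>\<^sub>0 nat) \<Rightarrow> 'a::comm_ring_1 pser" where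
  "mon a = (\<lambda>n. if n = a then 1 else 0)"

lemma mon_mult: "ps_mult (mon a) (mon b) = mon (a + b)"
proof
  fix n
  have "ps_mult (mon a) (mon b) n = (\<Sum>xy\<in>{(x, y). x + y = n}. if (a, b) = xy then 1 else 0)"
    unfolding ps_mult_def mon_def by (intro sum.cong) (auto split: if_splits)
  also have "\<dots> = (if (a, b) \<in> {(x, y). x + y = n} then 1 else 0)"
    by (rule sum.delta'[OF finite_decomp])
  finally show "ps_mult (mon a) (mon b) n = mon (a + b) n" by (auto simp: mon_def)
qed

lemma mon_pow: "ps_pow (mon a) k = mon (Poly_Mapping.map (\<lambda>i. k * i) a)"
proof (induction k)
  case 0
  have "Poly_Mapping.map (\<lambda>i. 0 * i) a = 0" by (intro poly_mapping_eqI) (simp add: lookup_map_pm)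
  then show ?case by (simp add: mon_def ps_one_def)
next
  case (Suc k)
  have "a + Poly_Mapping.map (\<lambda>i. k * i) a = Poly_Mapping.map (\<lambda>i. Suc k * i) a"
    by (intro poly_mapping_eqI) (simp add: lookup_map_pm lookup_add)
  then show ?case using Suc by (simp add: ps_pow_Suc mon_mult)
qed

lemma ps_var_mon: "ps_var j = mon (Poly_Mapping.single j 1)"
  unfolding ps_var_def mon_def ..

context witt begin

definition cg :: "'a pser \<Rightarrow> 'a pser \<Rightarrow> bool" where
  "cg c d \<longleftrightarrow> (\<forall>n. P dvd c n - d n)"

lemma cg_refl: "cg c c" unfolding cg_def by simp

lemma cg_mult: assumes "cg c c'" "cg d d'" shows "cg (ps_mult c d) (ps_mult c' d')"
  unfolding cg_def
proof
  fix n
  have "ps_mult c d n - ps_mult c' d' n =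
    (\<Sum>(a, b)\<in>{(a, b). a + b = n}. (c a - c' a) * d b + c' a * (d b - d' b))"
    unfolding ps_mult_def sum_subtractf[symmetric] by (intro sum.cong) (auto simp: algebra_simps)
  also have "P dvd \<dots>"
    using assms unfolding cg_def by (intro dvd_sum) (auto intro: dvd_add dvd_mult dvd_mult2)
  finally show "P dvd ps_mult c d n - ps_mult c' d' n" .
qed

lemma cg_pow: "cg c c' \<Longrightarrow> cg (ps_pow c k) (ps_pow c' k)"
  by (induction k) (simp_all add: ps_pow_Suc cg_mult cg_refl)

lemma cg_fv: "cg (frob_var p j) (mon (Poly_Mapping.single j p))"
proof -
  have "ps_pow (ps_var j) p = (mon (Poly_Mapping.single j p) :: 'a pser)"
    unfolding ps_var_mon mon_pow by simp
  then show ?thesis unfolding cg_def frob_var_def ps_add_def ps_smul_def by simp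
qed

lemma cg_FM:
  assumes "distinct L"
  shows "\<exists>a. cg (FM e L) (mon a) \<and> (\<forall>i. Poly_Mapping.lookup a i = (if i \<in> set L then p * e i else 0))"
  using assms
proof (induction L)
  case Nil
  show ?case by (intro exI[of _ 0]) (simp add: FM_def ps_one_def mon_def cg_refl)
next
  case (Cons j L)
  then obtain a where a: "cg (FM e L) (mon a)" "\<forall>i. Poly_Mapping.lookup a i = (if i \<in> set L then p * e i else 0)"
    by auto
  have "ps_pow (mon (Poly_Mapping.single j p)) (e j) = (mon (Poly_Mapping.single j (e j * p)) :: 'a pser)"
    unfolding mon_pow by simp
  then have "cg (ps_pow (frob_var p j) (e j)) (mon (Poly_Mapping.single j (e j * p)))"
    using cg_pow[OF cg_fv, of j "e j"] by simp
  from cg_mult[OF this a(1)] have "cg (FM e (j # L)) (mon (Poly_Mapping.single j (e j * p) + a))"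
    unfolding FM_Cons mon_mult .
  moreover have "Poly_Mapping.lookup (Poly_Mapping.single j (e j * p) + a) i = (if i \<in> set (j # L) then p * e i else 0)" for i
    using a(2) Cons.prems by (auto simp: lookup_add lookup_single when_def)
  ultimately show ?case by blast
qed

lemma cg_frob_mono: "cg (frob_mono p m) (mon (mp m))"
proof -
  obtain a where a: "cg (frob_mono p m) (mon a)"
    "\<forall>i. Poly_Mapping.lookup a i = (if i \<in> set (sorted_list_of_set (Poly_Mapping.keys m)) then p * Poly_Mapping.lookup m i else 0)"
    using cg_FM[of "sorted_list_of_set (Poly_Mapping.keys m)" "Poly_Mapping.lookup m"] unfolding frob_mono_FM by auto
  have "a = mp m"
    using a(2) by (intro poly_mapping_eqI) (simp add: lookup_mp in_keys_iff)
  then show ?thesis using a(1) by simp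
qed

lemma phi_cong_ps:
  fixes g :: "'a pser"
  shows "P dvd ps_phi p phi g n - pow_subst p (coeff_phi phi g) n"
proof -
  let ?F = "\<lambda>m. (frob_mono p m :: 'a pser)"
  let ?M = "{m. g m \<noteq> 0 \<and> ?F m n \<noteq> 0}"
  have finM: "finite ?M" using finite_M[of n] by (rule finite_subset[rotated]) auto
  have d1: "P dvd ps_phi p phi g n - (\<Sum>m\<in>?M. phi (g m) * mon (mp m) n)"
    unfolding ps_phi_def sum_subtractf[symmetric] right_diff_distrib[symmetric]
    using cg_frob_mono unfolding cg_def by (intro dvd_sum dvd_mult) auto
  have e2: "(\<Sum>m\<in>?M. phi (g m) * mon (mp m) n) = pow_subst p (coeff_phi phi g) n"
  proof (cases n rule: pow_subst_cases)
    case (1 m0)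
    have "(\<Sum>m\<in>?M. phi (g m) * mon (mp m) n) = (\<Sum>m\<in>?M. if m0 = m then phi (g m) else 0)"
      using 1 by (intro sum.cong) (auto simp: mon_def mp_eq_iff)
    also have "\<dots> = (if m0 \<in> ?M then phi (g m0) else 0)" by (rule sum.delta'[OF finM])
    also have "\<dots> = phi (g m0)"
    proof -
      have "?F m0 n \<noteq> 0"
      proof
        assume "?F m0 n = 0"
        moreover have "P dvd ?F m0 n - mon (mp m0) n" using cg_frob_mono[of m0] unfolding cg_def by blast
        ultimately have "P dvd - 1" using 1 by (simp add: mon_def)
        then have "P dvd 1" by (simp only: dvd_minus_iff)
        then show False using notunit by simp
      qed
      then show ?thesis by auto
    qed
    finally show ?thesis using 1 by (simp add: pow_subst_mp coeff_phi_def)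
  next
    case 2
    then have "(\<Sum>m\<in>?M. phi (g m) * mon (mp m) n) = 0" by (intro sum.neutral) (auto simp: mon_def)
    then show ?thesis using 2 by (simp add: pow_subst_notin)
  qed
  show ?thesis using d1 unfolding e2 .
qed

lemma pow_subst_phi_cong:
  fixes g :: "'a pser"
  shows "P dvd pow_subst p (coeff_phi phi g) n - pow_subst p (\<lambda>m. g m ^ p) n"
proof (cases n rule: pow_subst_cases)
  case (1 m0) then show ?thesis by (simp add: pow_subst_mp coeff_phi_def phi_cong)
next
  case 2 then show ?thesis by (simp add: pow_subst_notin)
qed

lemma delta_cong:
  fixes g :: "'a pser"
  shows "P dvd ps_phi p phi g n - ps_pow g p n" "P dvd pow_subst p (coeff_phi phi g) n - ps_pow g p n"
proof -
  have a: "P dvd pow_subst p (coeff_phi phi g) n - ps_pow g p n"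
    using dvd_diff[OF pow_subst_phi_cong[of g n] frob_cong[of g n]] by simp
  show "P dvd pow_subst p (coeff_phi phi g) n - ps_pow g p n" by (rule a)
  show "P dvd ps_phi p phi g n - ps_pow g p n"
    using dvd_add[OF phi_cong_ps[of g n] a] by simp
qed

end


lemma dvd3E:
  fixes x y z q :: "'r::comm_ring_1"
  assumes "q dvd x - y - z" obtains r where "x = y + z + q * r"
proof -
  from assms obtain r where "x - y - z = q * r" by (auto elim: dvdE)
  then have "x = y + z + q * r" by (simp add: algebra_simps)
  then show ?thesis by (rule that)
qed

lemma taylor1:
  fixes a e q :: "'r::comm_ring_1"
  shows "q ^ 2 dvd (a + q * e) ^ k - a ^ k - q * (of_nat k * a ^ (k - 1) * e)"
proof (induction k)
  case 0 then show ?case by simp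
next
  case (Suc k)
  then obtain r where r: "(a + q * e) ^ k = a ^ k + q * (of_nat k * a ^ (k - 1) * e) + q ^ 2 * r"
    by (rule dvd3E)
  have "(a + q * e) ^ Suc k = (a + q * e) * (a ^ k + q * (of_nat k * a ^ (k - 1) * e) + q ^ 2 * r)"
    using r by simp
  also have "\<dots> = a ^ Suc k + q * (of_nat k * (a * a ^ (k - 1)) * e) + q * e * a ^ k
      + q ^ 2 * (a * r + e * (of_nat k * a ^ (k - 1) * e) + q * e * r)"
    by (simp add: algebra_simps power2_eq_square)
  also have "of_nat k * (a * a ^ (k - 1)) = of_nat k * a ^ k"
    by (cases k) simp_all
  finally have "(a + q * e) ^ Suc k - a ^ Suc k - q * (of_nat (Suc k) * a ^ (Suc k - 1) * e)
     = q ^ 2 * (a * r + e * (of_nat k * a ^ (k - 1) * e) + q * e * r)"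
    by (simp add: algebra_simps)
  then show ?case by simp
qed

lemma taylorK:
  fixes a e :: "nat \<Rightarrow> 'r::comm_ring_1" and q :: 'r
  assumes "finite K"
  shows "q ^ 2 dvd (\<Prod>i\<in>K. (a i + q * e i) ^ k i) - (\<Prod>i\<in>K. a i ^ k i)
     - q * (\<Sum>j\<in>K. of_nat (k j) * a j ^ (k j - 1) * e j * (\<Prod>i\<in>K - {j}. a i ^ k i))"
  using assms
proof (induction K rule: finite_induct)
  case empty then show ?case by simp
next
  case (insert j K)
  let ?A = "a j ^ k j" and ?B = "of_nat (k j) * a j ^ (k j - 1) * e j"
  let ?A' = "\<Prod>i\<in>K. a i ^ k i"
  let ?B' = "\<Sum>j\<in>K. of_nat (k j) * a j ^ (k j - 1) * e j * (\<Prod>i\<in>K - {j}. a i ^ k i)"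
  obtain r where r: "(a j + q * e j) ^ k j = ?A + q * ?B + q ^ 2 * r"
    using taylor1[of q "a j" "e j" "k j"] by (rule dvd3E)
  obtain r' where r': "(\<Prod>i\<in>K. (a i + q * e i) ^ k i) = ?A' + q * ?B' + q ^ 2 * r'"
    using insert.IH by (rule dvd3E)
  have s1: "(\<Prod>i\<in>insert j K. (a i + q * e i) ^ k i) = (?A + q * ?B + q ^ 2 * r) * (?A' + q * ?B' + q ^ 2 * r')"
    using insert.hyps r r' by simp
  have s2: "(\<Prod>i\<in>insert j K. a i ^ k i) = ?A * ?A'" using insert.hyps by simp
  have s3: "(\<Sum>l\<in>insert j K. of_nat (k l) * a l ^ (k l - 1) * e l * (\<Prod>i\<in>insert j K - {l}. a i ^ k i))
      = ?B * ?A' + ?A * ?B'"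
  proof -
    have "insert j K - {j} = K" using insert.hyps by auto
    moreover have "(\<Sum>l\<in>K. of_nat (k l) * a l ^ (k l - 1) * e l * (\<Prod>i\<in>insert j K - {l}. a i ^ k i))
        = ?A * ?B'"
      unfolding sum_distrib_left
    proof (rule sum.cong[OF refl])
      fix l assume l: "l \<in> K"
      then have "insert j K - {l} = insert j (K - {l})" using insert.hyps by auto
      then have "(\<Prod>i\<in>insert j K - {l}. a i ^ k i) = ?A * (\<Prod>i\<in>K - {l}. a i ^ k i)"
        using insert.hyps by simp
      then show "of_nat (k l) * a l ^ (k l - 1) * e l * (\<Prod>i\<in>insert j K - {l}. a i ^ k i)
        = ?A * (of_nat (k l) * a l ^ (k l - 1) * e l * (\<Prod>i\<in>K - {l}. a i ^ k i))"
        by (simp add: algebra_simps)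
    qed
    ultimately show ?thesis using insert.hyps by simp
  qed
  have "(?A + q * ?B + q ^ 2 * r) * (?A' + q * ?B' + q ^ 2 * r') - ?A * ?A' - q * (?B * ?A' + ?A * ?B')
     = q ^ 2 * (?B * ?B' + r * (?A' + q * ?B' + q ^ 2 * r') + (?A + q * ?B) * r')"
    by (simp add: algebra_simps power2_eq_square)
  then show ?case unfolding s1 s2 s3 by simp
qed


context witt begin

lemma ev_taylor:
  fixes h :: "'a pser" and a e :: "nat \<Rightarrow> 'a"
  assumes hr: "restricted p h" and hv: "in_vars N h"
  shows "P ^ 2 dvd ps_eval p h (\<lambda>j. a j + P * e j) - ps_eval p h a
     - P * (\<Sum>j\<le>N. ps_eval p (ps_deriv j h) a * e j)"
proof -
  let ?K = "{..N}"
  let ?G = "S 2 h"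
  let ?b = "\<lambda>j. a j + P * e j"
  define D where "D j m = of_nat (Poly_Mapping.lookup m j) * a j ^ (Poly_Mapping.lookup m j - 1)
      * (\<Prod>i\<in>?K - {j}. a i ^ Poly_Mapping.lookup m i)" for j m
  have fG: "finite ?G" using hr restricted_S by blast
  have keysK: "Poly_Mapping.keys m \<subseteq> ?K" if "h m \<noteq> 0" for m
    using hv that unfolding in_vars_def by blast
  have t1: "P ^ 2 dvd ps_eval p h ?b - (\<Sum>m\<in>?G. h m * mev ?b m)"
    using ev_approx[OF hr fG subset_refl] .
  have t2: "P ^ 2 dvd ps_eval p h a - (\<Sum>m\<in>?G. h m * mev a m)"
    using ev_approx[OF hr fG subset_refl] .
  have t3: "P ^ 2 dvd (\<Sum>m\<in>?G. h m * mev ?b m) - (\<Sum>m\<in>?G. h m * mev a m)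
      - P * (\<Sum>j\<le>N. e j * (\<Sum>m\<in>?G. h m * D j m))"
  proof -
    have "P ^ 2 dvd h m * mev ?b m - h m * mev a m - P * (\<Sum>j\<le>N. e j * (h m * D j m))" for m
    proof (cases "h m = 0")
      case True then show ?thesis by simp
    next
      case False
      then have k: "Poly_Mapping.keys m \<subseteq> ?K" by (rule keysK)
      have "P ^ 2 dvd (\<Prod>i\<in>?K. (a i + P * e i) ^ Poly_Mapping.lookup m i) - (\<Prod>i\<in>?K. a i ^ Poly_Mapping.lookup m i)
         - P * (\<Sum>j\<in>?K. of_nat (Poly_Mapping.lookup m j) * a j ^ (Poly_Mapping.lookup m j - 1) * e j
            * (\<Prod>i\<in>?K - {j}. a i ^ Poly_Mapping.lookup m i))"
        by (rule taylorK) simp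
      then have "P ^ 2 dvd mev ?b m - mev a m - P * (\<Sum>j\<le>N. e j * D j m)"
        unfolding mono_K[OF finite_atMost k] D_def by (simp add: algebra_simps)
      then have "P ^ 2 dvd h m * (mev ?b m - mev a m - P * (\<Sum>j\<le>N. e j * D j m))" by (rule dvd_mult)
      then show ?thesis by (simp add: algebra_simps sum_distrib_left)
    qed
    then have "P ^ 2 dvd (\<Sum>m\<in>?G. h m * mev ?b m - h m * mev a m - P * (\<Sum>j\<le>N. e j * (h m * D j m)))"
      by (rule dvd_sum)
    moreover have "(\<Sum>m\<in>?G. P * (\<Sum>j\<le>N. e j * (h m * D j m))) = P * (\<Sum>j\<le>N. e j * (\<Sum>m\<in>?G. h m * D j m))"
      unfolding sum_distrib_left by (rule sum.swap)
    ultimately show ?thesis by (simp only: sum_subtractf)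
  qed
  have t4: "P dvd ps_eval p (ps_deriv j h) a - (\<Sum>m\<in>?G. h m * D j m)" if j: "j \<le> N" for j
  proof -
    let ?ej = "Poly_Mapping.single j 1 :: nat \<Rightarrow>\<^sub>0 nat"
    let ?G' = "(\<lambda>m. m + ?ej) -` ?G"
    have injs: "inj (\<lambda>m. m + ?ej)" by (auto simp: inj_def)
    have fG': "finite ?G'" using fG injs by (intro finite_vimageI)
    have sub: "S 1 (ps_deriv j h) \<subseteq> ?G'"
    proof
      fix m assume "m \<in> S 1 (ps_deriv j h)"
      then have "\<not> P ^ 1 dvd ps_deriv j h m" unfolding S_def by simp
      then have "\<not> P dvd of_nat (Suc (Poly_Mapping.lookup m j)) * h (m + ?ej)" unfolding ps_deriv_def by simp
      then have nd: "\<not> P dvd h (m + ?ej)" using dvd_mult by blast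
      have "m + ?ej \<in> S 2 h"
      proof (rule ccontr)
        assume "m + ?ej \<notin> S 2 h"
        then have "P ^ 2 dvd h (m + ?ej)" unfolding S_def by simp
        moreover have "P dvd P ^ 2" by (simp add: power2_eq_square)
        ultimately show False using nd dvd_trans by blast
      qed
      then show "m \<in> ?G'" by simp
    qed
    have a1: "P dvd ps_eval p (ps_deriv j h) a - (\<Sum>m\<in>?G'. ps_deriv j h m * mev a m)"
      using ev_approx[OF restricted_deriv[OF hr] fG' sub] by simp
    have a2: "(\<Sum>m\<in>?G'. ps_deriv j h m * mev a m) = (\<Sum>m\<in>?G'. h (m + ?ej) * D j (m + ?ej))"
    proof (rule sum.cong[OF refl])
      fix m
      show "ps_deriv j h m * mev a m = h (m + ?ej) * D j (m + ?ej)"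
      proof (cases "h (m + ?ej) = 0")
        case True then show ?thesis by (simp add: ps_deriv_def)
      next
        case False
        then have k: "Poly_Mapping.keys (m + ?ej) \<subseteq> ?K" by (rule keysK)
        have lk: "Poly_Mapping.lookup (m + ?ej) i = Poly_Mapping.lookup m i + (if i = j then 1 else 0)" for i
          by (simp add: lookup_add lookup_single when_def)
        have km: "Poly_Mapping.keys m \<subseteq> ?K"
        proof
          fix i assume "i \<in> Poly_Mapping.keys m"
          then have "Poly_Mapping.lookup (m + ?ej) i \<noteq> 0" using lk[of i] by (simp add: in_keys_iff)
          then have "i \<in> Poly_Mapping.keys (m + ?ej)" by (simp add: in_keys_iff)
          then show "i \<in> ?K" using k by blast
        qed
        have q1: "mev a m = a j ^ Poly_Mapping.lookup m j * (\<Prod>i\<in>?K - {j}. a i ^ Poly_Mapping.lookup m i)"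
          unfolding mono_K[OF finite_atMost km] using j by (simp add: prod.remove)
        have q2: "(\<Prod>i\<in>?K - {j}. a i ^ Poly_Mapping.lookup (m + ?ej) i) = (\<Prod>i\<in>?K - {j}. a i ^ Poly_Mapping.lookup m i)"
          by (intro prod.cong) (auto simp: lookup_add lookup_single when_def)
        have q3: "Poly_Mapping.lookup (m + ?ej) j = Suc (Poly_Mapping.lookup m j)" by (simp add: lookup_add)
        show ?thesis unfolding ps_deriv_def D_def q1 q2 q3 by (simp add: algebra_simps)
      qed
    qed
    have a3: "(\<Sum>m\<in>?G'. h (m + ?ej) * D j (m + ?ej)) = (\<Sum>m\<in>(\<lambda>m. m + ?ej) ` ?G'. h m * D j m)"
    proof -
      have "inj_on (\<lambda>m. m + ?ej) ?G'" using injs by (rule inj_on_subset) simp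
      from sum.reindex[OF this, of "\<lambda>m. h m * D j m"] show ?thesis unfolding comp_def by (rule sym)
    qed
    have a4: "(\<Sum>m\<in>(\<lambda>m. m + ?ej) ` ?G'. h m * D j m) = (\<Sum>m\<in>?G. h m * D j m)"
    proof (rule sum.mono_neutral_left[OF fG])
      show "(\<lambda>m. m + ?ej) ` ?G' \<subseteq> ?G" by auto
      show "\<forall>m\<in>?G - (\<lambda>m. m + ?ej) ` ?G'. h m * D j m = 0"
      proof
        fix m assume m: "m \<in> ?G - (\<lambda>m. m + ?ej) ` ?G'"
        have "Poly_Mapping.lookup m j = 0"
        proof (rule ccontr)
          assume nz: "Poly_Mapping.lookup m j \<noteq> 0"
          have "m - ?ej + ?ej = m"
            using nz by (intro poly_mapping_eqI) (auto simp: lookup_add lookup_minus lookup_single when_def)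
          then have "m \<in> (\<lambda>m. m + ?ej) ` ?G'" using m by (metis DiffE imageI vimageI)
          then show False using m by blast
        qed
        then show "h m * D j m = 0" by (simp add: D_def)
      qed
    qed
    show ?thesis using a1 unfolding a2 a3 a4 .
  qed
  have t5: "P ^ 2 dvd P * (\<Sum>j\<le>N. e j * (ps_eval p (ps_deriv j h) a - (\<Sum>m\<in>?G. h m * D j m)))"
  proof -
    have "P dvd (\<Sum>j\<le>N. e j * (ps_eval p (ps_deriv j h) a - (\<Sum>m\<in>?G. h m * D j m)))"
      using t4 by (intro dvd_sum dvd_mult) auto
    then show ?thesis by (simp add: power2_eq_square mult_dvd_mono)
  qed
  have "ps_eval p h ?b - ps_eval p h a - P * (\<Sum>j\<le>N. ps_eval p (ps_deriv j h) a * e j)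
     = (ps_eval p h ?b - (\<Sum>m\<in>?G. h m * mev ?b m)) - (ps_eval p h a - (\<Sum>m\<in>?G. h m * mev a m))
       + ((\<Sum>m\<in>?G. h m * mev ?b m) - (\<Sum>m\<in>?G. h m * mev a m) - P * (\<Sum>j\<le>N. e j * (\<Sum>m\<in>?G. h m * D j m)))
       - P * (\<Sum>j\<le>N. e j * (ps_eval p (ps_deriv j h) a - (\<Sum>m\<in>?G. h m * D j m)))"
    by (simp add: algebra_simps sum_subtractf sum_distrib_left)
  also have "P ^ 2 dvd \<dots>" by (rule dvd_diff[OF dvd_add[OF dvd_diff[OF t1 t2] t3] t5])
  finally show ?thesis .
qed

end


context witt begin

lemma ev_delta:
  fixes g :: "'a pser" and x :: "nat \<Rightarrow> 'a"
  assumes g: "restricted p g"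
  shows "P * ps_eval p (ps_delta p phi g) x = ps_eval p (coeff_phi phi g) (\<lambda>j. x j ^ p + P * x (Suc j)) - ps_eval p g x ^ p"
    "restricted p (ps_delta p phi g)"
proof -
  let ?h = "\<lambda>n. ps_phi p phi g n - ps_pow g p n"
  have r1: "restricted p (ps_phi p phi g)" by (rule ev_phi(2)[OF g])
  have r2: "restricted p (ps_pow g p)" by (rule ev_pow(2)[OF g])
  have rh: "restricted p ?h" by (rule ev_sub(2)[OF r1 r2])
  have dh: "P dvd ?h n" for n by (rule delta_cong(1))
  have eq: "ps_delta p phi g = (\<lambda>n. div_p p (?h n))" unfolding ps_delta_def ..
  show "restricted p (ps_delta p phi g)" unfolding eq by (rule ev_div(2)[OF rh dh])
  have "P * ps_eval p (ps_delta p phi g) x = ps_eval p ?h x" unfolding eq by (rule ev_div(1)[OF rh dh])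
  also have "\<dots> = ps_eval p (ps_phi p phi g) x - ps_eval p (ps_pow g p) x" by (rule ev_sub(1)[OF r1 r2])
  finally show "P * ps_eval p (ps_delta p phi g) x = ps_eval p (coeff_phi phi g) (\<lambda>j. x j ^ p + P * x (Suc j)) - ps_eval p g x ^ p"
    by (simp add: ev_phi(1)[OF g] ev_pow(1)[OF g])
qed

lemma ev_dp:
  fixes g :: "'a pser" and x :: "nat \<Rightarrow> 'a"
  assumes g: "restricted p g"
  shows "P * ps_eval p (ps_dp p phi g) x = ps_eval p (coeff_phi phi g) (\<lambda>j. x j ^ p) - ps_eval p g x ^ p"
proof -
  let ?h = "\<lambda>n. pow_subst p (coeff_phi phi g) n - ps_pow g p n"
  have r1: "restricted p (pow_subst p (coeff_phi phi g))" by (rule ev_pow_subst(2)[OF restricted_coeff_phi[OF g]])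
  have r2: "restricted p (ps_pow g p)" by (rule ev_pow(2)[OF g])
  have rh: "restricted p ?h" by (rule ev_sub(2)[OF r1 r2])
  have dh: "P dvd ?h n" for n by (rule delta_cong(2))
  have eq: "ps_dp p phi g = (\<lambda>n. div_p p (?h n))" unfolding ps_dp_def ..
  have "P * ps_eval p (ps_dp p phi g) x = ps_eval p ?h x" unfolding eq by (rule ev_div(1)[OF rh dh])
  also have "\<dots> = ps_eval p (pow_subst p (coeff_phi phi g)) x - ps_eval p (ps_pow g p) x" by (rule ev_sub(1)[OF r1 r2])
  finally show ?thesis
    by (simp add: ev_pow_subst(1)[OF restricted_coeff_phi[OF g]] ev_pow(1)[OF g])
qed

lemma in_vars_mult: "in_vars N c \<Longrightarrow> in_vars N d \<Longrightarrow> in_vars N (ps_mult c d :: 'a pser)"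
  unfolding in_vars_def
proof (intro allI impI)
  fix m assume c: "\<forall>m. c m \<noteq> 0 \<longrightarrow> Poly_Mapping.keys m \<subseteq> {..N}" and d: "\<forall>m. d m \<noteq> 0 \<longrightarrow> Poly_Mapping.keys m \<subseteq> {..N}"
    and nz: "ps_mult c d m \<noteq> 0"
  from mult_nz[OF nz] obtain a b where ab: "a + b = m" "c a \<noteq> 0" "d b \<noteq> 0" by metis
  have "Poly_Mapping.keys m \<subseteq> Poly_Mapping.keys a \<union> Poly_Mapping.keys b" unfolding ab(1)[symmetric] by (rule keys_add)
  then show "Poly_Mapping.keys m \<subseteq> {..N}" using c d ab by blast
qed

lemma in_vars_pow: "in_vars N c \<Longrightarrow> in_vars N (ps_pow c k :: 'a pser)"
proof (induction k)
  case 0 then show ?case by (simp add: in_vars_def ps_one_def)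
next
  case (Suc k) then show ?case by (simp add: ps_pow_Suc in_vars_mult)
qed

lemma in_vars_coeff_phi: "in_vars N g \<Longrightarrow> in_vars N (coeff_phi phi g)"
  unfolding in_vars_def coeff_phi_def by (metis phi_0)

lemma in_vars_delta:
  fixes g :: "'a pser"
  assumes "in_vars N g" shows "in_vars (Suc N) (ps_delta p phi g)"
  unfolding in_vars_def
proof (intro allI impI)
  fix n assume nz: "ps_delta p phi g n \<noteq> 0"
  then have "ps_phi p phi g n - ps_pow g p n \<noteq> 0" unfolding ps_delta_def by auto
  then consider "ps_phi p phi g n \<noteq> 0" | "ps_pow g p n \<noteq> 0" by fastforce
  then show "Poly_Mapping.keys n \<subseteq> {..Suc N}"
  proof cases
    case 1
    then have "(\<Sum>m\<in>{m. g m \<noteq> 0 \<and> (frob_mono p m :: 'a pser) n \<noteq> 0}. phi (g m) * frob_mono p m n) \<noteq> 0"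
      unfolding ps_phi_def .
    then obtain m where "m \<in> {m. g m \<noteq> 0 \<and> (frob_mono p m :: 'a pser) n \<noteq> 0}"
      by (rule sum.not_neutral_contains_not_neutral)
    then have m: "g m \<noteq> 0" "(frob_mono p m :: 'a pser) n \<noteq> 0" by simp_all
    have km: "Poly_Mapping.keys m \<subseteq> {..N}" using assms m(1) unfolding in_vars_def by blast
    have "Poly_Mapping.keys n \<subseteq> (\<Union>j\<in>Poly_Mapping.keys m. {j, Suc j})" using frob_mono_nz[OF m(2)] by blast
    moreover have "(\<Union>j\<in>Poly_Mapping.keys m. {j, Suc j}) \<subseteq> {..Suc N}" using km by auto
    ultimately show ?thesis by (rule subset_trans)
  next
    case 2
    have "in_vars N (ps_pow g p)" using assms by (rule in_vars_pow)
    then show ?thesis using 2 unfolding in_vars_def by fastforce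
  qed
qed

abbreviation X where "X u \<equiv> nabla p phi u"

lemma phi_X: "X u j ^ p + P * X u (Suc j) = phi (X u j)"
  unfolding nabla_def using delta_mult[of "(dl ^^ j) u"] by simp

lemma ev_delta_X:
  fixes g :: "'a pser"
  assumes g: "restricted p g"
  shows "ps_eval p (ps_delta p phi g) (X u) = dl (ps_eval p g (X u))"
proof -
  have "P * ps_eval p (ps_delta p phi g) (X u) = ps_eval p (coeff_phi phi g) (\<lambda>j. phi (X u j)) - ps_eval p g (X u) ^ p"
    using ev_delta(1)[OF g, of "X u"] by (simp add: phi_X)
  also have "\<dots> = P * dl (ps_eval p g (X u))" by (simp add: ev_coeff_phi[OF g] delta_mult)
  finally show ?thesis by (rule cancelP)
qed

lemma B_iff:
  fixes g :: "'a pser"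
  assumes g: "restricted p g" and gv: "in_vars N g"
  shows "P dvd (ps_eval p (ps_dp p phi g) (X u)
       + (\<Sum>j\<le>N. ps_eval p (ps_deriv j (coeff_phi phi g)) (nabla_pow p phi u) * (dl ^^ Suc j) u))
     \<longleftrightarrow> P dvd ps_eval p (ps_delta p phi g) (X u)"
proof -
  let ?h = "coeff_phi phi g"
  let ?a = "\<lambda>j. X u j ^ p" and ?e = "\<lambda>j. X u (Suc j)"
  let ?G = "ps_eval p g (X u)"
  let ?Sig = "\<Sum>j\<le>N. ps_eval p (ps_deriv j ?h) ?a * ?e j"
  have na: "nabla_pow p phi u = ?a" unfolding nabla_pow_def nabla_def ..
  have ne: "(dl ^^ Suc j) u = ?e j" for j unfolding nabla_def ..
  have T: "P ^ 2 dvd ps_eval p ?h (\<lambda>j. ?a j + P * ?e j) - ps_eval p ?h ?a - P * ?Sig"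
    by (rule ev_taylor[OF restricted_coeff_phi[OF g] in_vars_coeff_phi[OF gv]])
  have e1: "ps_eval p ?h (\<lambda>j. ?a j + P * ?e j) = phi ?G"
    unfolding phi_X by (rule ev_coeff_phi[OF g])
  have e2: "P * ps_eval p (ps_delta p phi g) (X u) = phi ?G - ?G ^ p"
    using ev_delta(1)[OF g, of "X u"] by (simp add: phi_X ev_coeff_phi[OF g])
  have e3: "P * ps_eval p (ps_dp p phi g) (X u) = ps_eval p ?h ?a - ?G ^ p"
    by (rule ev_dp[OF g])
  have "P * (ps_eval p (ps_delta p phi g) (X u) - (ps_eval p (ps_dp p phi g) (X u) + ?Sig))
     = ps_eval p ?h (\<lambda>j. ?a j + P * ?e j) - ps_eval p ?h ?a - P * ?Sig"
    unfolding e1 by (simp add: right_diff_distrib distrib_left e2 e3)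
  then have "P ^ Suc 1 dvd P * (ps_eval p (ps_delta p phi g) (X u) - (ps_eval p (ps_dp p phi g) (X u) + ?Sig))"
    using T by (simp only: numeral_2_eq_2 One_nat_def)
  then have "P ^ 1 dvd ps_eval p (ps_delta p phi g) (X u) - (ps_eval p (ps_dp p phi g) (X u) + ?Sig)"
    by (rule dvd_cancelP_pow)
  then have D: "P dvd ps_eval p (ps_delta p phi g) (X u) - (ps_eval p (ps_dp p phi g) (X u) + ?Sig)"
    by simp
  have "P dvd (ps_eval p (ps_dp p phi g) (X u) + ?Sig) \<longleftrightarrow> P dvd ps_eval p (ps_delta p phi g) (X u)"
  proof
    assume a: "P dvd (ps_eval p (ps_dp p phi g) (X u) + ?Sig)"
    have "P dvd (ps_eval p (ps_delta p phi g) (X u) - (ps_eval p (ps_dp p phi g) (X u) + ?Sig)) + (ps_eval p (ps_dp p phi g) (X u) + ?Sig)"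
      using D a by (rule dvd_add)
    then show "P dvd ps_eval p (ps_delta p phi g) (X u)" by simp
  next
    assume a: "P dvd ps_eval p (ps_delta p phi g) (X u)"
    have "P dvd ps_eval p (ps_delta p phi g) (X u) - (ps_eval p (ps_delta p phi g) (X u) - (ps_eval p (ps_dp p phi g) (X u) + ?Sig))"
      using a D by (rule dvd_diff)
    then show "P dvd (ps_eval p (ps_dp p phi g) (X u) + ?Sig)" by simp
  qed
  then show ?thesis unfolding na ne .
qed

end


context witt begin

lemma iter_facts:
  fixes f :: "'a pser"
  assumes "restricted p f" "in_vars r f"
  shows "restricted p ((ps_delta p phi ^^ i) f) \<and> in_vars (r + i) ((ps_delta p phi ^^ i) f)
     \<and> ps_eval p ((ps_delta p phi ^^ i) f) (X u) = (dl ^^ i) (ps_eval p f (X u))"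
proof (induction i)
  case 0 then show ?case using assms by simp
next
  case (Suc i)
  then show ?case by (simp add: ev_delta(2) in_vars_delta ev_delta_X)
qed

end

theorem proposition5p2:
  fixes p :: nat and phi :: "'a::comm_ring_1 \<Rightarrow> 'a" and f :: "'a pser"
    and r :: nat and u :: 'a
  assumes "prime p"
    and "Witt_Fpbar_Frobenius p phi"
    and "restricted p f"
    and "in_vars r f"
  defines "B \<equiv> (\<forall>i. of_nat p dvd
      (ps_eval p (ps_dp p phi ((ps_delta p phi ^^ i) f)) (nabla p phi u)
       + (\<Sum>j\<le>r + i. ps_eval p (ps_deriv j (coeff_phi phi ((ps_delta p phi ^^ i) f)))
                          (nabla_pow p phi u)
                      * (delta p phi ^^ Suc j) u)))"
  shows "(ps_eval p f (nabla p phi u) = 0 \<longleftrightarrow>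
            (of_nat p dvd ps_eval p f (nabla p phi u) \<and> B))
       \<and> (ps_eval p (ps_delta p phi f) (nabla p phi u) = 0 \<longleftrightarrow> B)"
proof -
  interpret witt p phi by (rule witt.intro) (rule assms(2))
  let ?v = "ps_eval p f (nabla p phi u)"
  note it = iter_facts[OF assms(3,4), of _ u]
  have Bi: "B \<longleftrightarrow> (\<forall>i. of_nat p dvd (delta p phi ^^ Suc i) ?v)"
  proof -
    have "(of_nat p dvd
      (ps_eval p (ps_dp p phi ((ps_delta p phi ^^ i) f)) (nabla p phi u)
       + (\<Sum>j\<le>r + i. ps_eval p (ps_deriv j (coeff_phi phi ((ps_delta p phi ^^ i) f)))
                          (nabla_pow p phi u)
                      * (delta p phi ^^ Suc j) u))) \<longleftrightarrow> of_nat p dvd (delta p phi ^^ Suc i) ?v" for i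
    proof -
      have "(of_nat p dvd
        (ps_eval p (ps_dp p phi ((ps_delta p phi ^^ i) f)) (nabla p phi u)
         + (\<Sum>j\<le>r + i. ps_eval p (ps_deriv j (coeff_phi phi ((ps_delta p phi ^^ i) f)))
                            (nabla_pow p phi u)
                        * (delta p phi ^^ Suc j) u))) \<longleftrightarrow>
          of_nat p dvd ps_eval p (ps_delta p phi ((ps_delta p phi ^^ i) f)) (nabla p phi u)"
        using B_iff it[of i] by blast
      also have "ps_eval p (ps_delta p phi ((ps_delta p phi ^^ i) f)) (nabla p phi u) = (delta p phi ^^ Suc i) ?v"
        using it[of "Suc i"] by simp
      finally show ?thesis .
    qed
    then show ?thesis unfolding B_def by simp
  qed
  have e1: "ps_eval p (ps_delta p phi f) (nabla p phi u) = delta p phi ?v"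
    using it[of 1] by simp
  have part2: "delta p phi ?v = 0 \<longleftrightarrow> B"
    unfolding Bi zero_iff_all[of "delta p phi ?v"] funpow_Suc_right comp_def ..
  show ?thesis unfolding e1 using part2 zero_iff_delta[of ?v] by blast
qed


end
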